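(* Let $p\in(0,1)$. The TBF $\mu'_p$ is consistent with a translation-invariant left interval-specification $\rho_p$ on $(\Omega',\mathscr F')$ whose single-site kernel at the origin depends only on $\omega'_0$ and on $n(\omega')$, namely $$\rho_{p,\{0\}}(\sigma_0=0\mid\omega')=g_p(n(\omega')),\qquad \rho_{p,\{0\}}(\sigma_0=1\mid\omega')=1-g_p(n(\omega')),$$ where $g_p(0)=0$, $g_p(1)=1-p$, and for $n\in\{2,3,\dots\}$ $$g_p(n)=\frac{(-1)^{n+1}|a|^n\frac{\lambda_{PF}}{1-\lambda_r}+\frac{\lambda_{PF}}{1-\lambda_{PF}}}{(-1)^n|a|^{n-1}\frac{1}{1-\lambda_r}+\frac{1}{1-\lambda_{PF}}},$$ and $g_p(\infty)=\lambda_{PF}$ (the value of the same formula with $|a|^\infty:=0$).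
   Context: Fix $p\in(0,1)$. Let $\Omega=\{0,1\}^{\mathbb{Z}}$ with product $\sigma$-algebra $\mathscr F$, $\mu_p=\mathrm{Ber}(p)^{\otimes\mathbb{Z}}$, $T:\Omega\to\Omega$, $(T\omega)_i=\omega_i\big(1-(1-\omega_{i-1})(1-\omega_{i+1})\big)$, $\Omega'=T(\Omega)$ (configurations in which every occupied site has an occupied neighbour), $\mathscr F'=\mathscr F\cap\Omega'$, and the TBF $\mu'_p=\mu_p\circ T^{-1}$. $\sigma_i$ denotes the spin at site $i$. Let $\lambda_{PF}=\tfrac12\big(1-p+\sqrt{(1-p)(3p+1)}\big)\in(0,1)$, $\lambda_r=\tfrac12\big(1-p-\sqrt{(1-p)(3p+1)}\big)\in(-\tfrac13,0)$ (the eigenvalues of the matrix $\begin{pmatrix}1-p&\sqrt{p(1-p)}\\ \sqrt{p(1-p)}&0\end{pmatrix}$), and $a=\lambda_r/\lambda_{PF}\in(-1,0)$. For $\omega'\in\Omega'$ let $n(\omega')=\min\{i\in\mathbb N:(\omega'_{-i-1},\omega'_{-i})=(1,1)\}$ (distance to the nearest pair of adjacent occupied sites in the past), with the conventions $n(\omega')=0$ if $(\omega'_{-2},\omega'_{-1})=(0,1)$ and $n(\omega')=\infty$ if no such pair exists. Left interval-specification (LIS): let $\mathcal S_b$ be the set of finite integer intervals; for $\Lambda\in\mathcal S_b$ write $l_\Lambda=\min\Lambda$, $m_\Lambda=\max\Lambda$, $\mathscr F_{\le x}$, $\mathscr F_{<x}$ for the $\sigma$-algebras generated by spins in $(-\infty,x]$,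 $(-\infty,x)$. A LIS is a family $(\rho_\Lambda)_{\Lambda\in\mathcal S_b}$ of probability kernels $\rho_\Lambda:\mathscr F_{\le m_\Lambda}\times\Omega'\to[0,1]$ such that $\rho_\Lambda(A\mid\cdot)$ is $\mathscr F_{<l_\Lambda}$-measurable, $\rho_\Lambda(B\mid\omega)=\mathbb 1_B(\omega)$ for $B\in\mathscr F_{<l_\Lambda}$, and $\rho_\Delta\rho_\Lambda f=\rho_\Delta f$ for $\Lambda\subset\Delta$ and $\mathscr F_{\le m_\Lambda}$-measurable $f$. A probability measure $\mu$ is consistent with $\rho$ if $\mu\rho_\Lambda(f)=\mu(f)$ for all $\Lambda\in\mathcal S_b$ and all $\mathscr F_{\le m_\Lambda}$-measurable $f$. A LIS is determined by its single-site kernels; translation invariance means $\rho_{\{i\}}$ is the shift of $\rho_{\{0\}}$. *)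

theory Defs
  imports "HOL-Probability.Probability"
begin

text \<open>Configurations: \<open>\<omega> :: int \<Rightarrow> bool\<close>, True = occupied (spin 1).\<close>

definition Mfull :: "(int \<Rightarrow> bool) measure" where
  "Mfull = PiM UNIV (\<lambda>_::int. count_space (UNIV::bool set))"

definition mu :: "real \<Rightarrow> (int \<Rightarrow> bool) measure" where
  "mu p = PiM UNIV (\<lambda>_::int. measure_pmf (bernoulli_pmf p))"

definition Tmap :: "(int \<Rightarrow> bool) \<Rightarrow> (int \<Rightarrow> bool)" where
  "Tmap \<omega> = (\<lambda>i. \<omega> i \<and> (\<omega> (i - 1) \<or> \<omega> (i + 1)))"

definition Omega' :: "(int \<Rightarrow> bool) set" where
  "Omega' = range Tmap"

definition F' :: "(int \<Rightarrow> bool) measure" where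
  "F' = restrict_space Mfull Omega'"

definition mu' :: "real \<Rightarrow> (int \<Rightarrow> bool) measure" where
  "mu' p = distr (mu p) F' Tmap"

definition Fle :: "int \<Rightarrow> (int \<Rightarrow> bool) measure" where
  "Fle x = restrict_space (sigma UNIV {{\<omega>. \<omega> i} | i. i \<le> x}) Omega'"

definition Flt :: "int \<Rightarrow> (int \<Rightarrow> bool) measure" where
  "Flt x = Fle (x - 1)"

text \<open>Left interval-specification: \<open>\<rho> l m \<omega>\<close> is the kernel \<open>\<rho>_\<Lambda>(\<cdot>|\<omega>)\<close> for
  \<open>\<Lambda> = {l..m}\<close> (\<open>l \<le> m\<close>), a probability measure on \<open>\<F>_{\<le>m}\<close> (traced on \<open>\<Omega>'\<close>).\<close>
definition is_LIS :: "(int \<Rightarrow> int \<Rightarrow> (int \<Rightarrow> bool) \<Rightarrow> (int \<Rightarrow> bool) measure) \<Rightarrow> bool" where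
  "is_LIS \<rho> \<longleftrightarrow>
     (\<forall>l m \<omega>. l \<le> m \<longrightarrow> \<omega> \<in> Omega' \<longrightarrow>
        prob_space (\<rho> l m \<omega>) \<and> sets (\<rho> l m \<omega>) = sets (Fle m)) \<and>
     (\<forall>l m A. l \<le> m \<longrightarrow> A \<in> sets (Fle m) \<longrightarrow>
        (\<lambda>\<omega>. measure (\<rho> l m \<omega>) A) \<in> borel_measurable (Flt l)) \<and>
     (\<forall>l m B \<omega>. l \<le> m \<longrightarrow> B \<in> sets (Flt l) \<longrightarrow> \<omega> \<in> Omega' \<longrightarrow>
        measure (\<rho> l m \<omega>) B = indicator B \<omega>) \<and>
     (\<forall>l m l' m' f \<omega>. l' \<le> l \<longrightarrow> l \<le> m \<longrightarrow> m \<le> m' \<longrightarrow>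
        f \<in> borel_measurable (Fle m) \<longrightarrow> bounded (range (f :: (int \<Rightarrow> bool) \<Rightarrow> real)) \<longrightarrow>
        \<omega> \<in> Omega' \<longrightarrow>
        (\<integral>\<eta>. (\<integral>\<zeta>. f \<zeta> \<partial>(\<rho> l m \<eta>)) \<partial>(\<rho> l' m' \<omega>)) = (\<integral>\<zeta>. f \<zeta> \<partial>(\<rho> l' m' \<omega>)))"

definition consistent_LIS ::
  "(int \<Rightarrow> bool) measure \<Rightarrow> (int \<Rightarrow> int \<Rightarrow> (int \<Rightarrow> bool) \<Rightarrow> (int \<Rightarrow> bool) measure) \<Rightarrow> bool" where
  "consistent_LIS \<mu> \<rho> \<longleftrightarrow>
     (\<forall>l m f. l \<le> m \<longrightarrow>
        f \<in> borel_measurable (Fle m) \<longrightarrow> bounded (range (f :: (int \<Rightarrow> bool) \<Rightarrow> real)) \<longrightarrow>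
        (\<integral>\<omega>. (\<integral>\<zeta>. f \<zeta> \<partial>(\<rho> l m \<omega>)) \<partial>\<mu>) = (\<integral>\<omega>. f \<omega> \<partial>\<mu>))"

definition shift :: "int \<Rightarrow> (int \<Rightarrow> bool) \<Rightarrow> (int \<Rightarrow> bool)" where
  "shift i \<omega> = (\<lambda>j. \<omega> (j + i))"

definition transl_inv_LIS :: "(int \<Rightarrow> int \<Rightarrow> (int \<Rightarrow> bool) \<Rightarrow> (int \<Rightarrow> bool) measure) \<Rightarrow> bool" where
  "transl_inv_LIS \<rho> \<longleftrightarrow>
     (\<forall>i \<omega> A. \<omega> \<in> Omega' \<longrightarrow> A \<in> sets (Fle i) \<longrightarrow>
        measure (\<rho> i i \<omega>) A = measure (\<rho> 0 0 (shift i \<omega>)) (shift i ` A))"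

definition nfun :: "(int \<Rightarrow> bool) \<Rightarrow> enat" where
  "nfun \<omega> =
     (if \<not> \<omega> (-2) \<and> \<omega> (-1) then 0
      else if \<exists>i::nat. i \<ge> 1 \<and> \<omega> (- int i - 1) \<and> \<omega> (- int i)
      then enat (LEAST i::nat. i \<ge> 1 \<and> \<omega> (- int i - 1) \<and> \<omega> (- int i))
      else \<infinity>)"

definition lamPF :: "real \<Rightarrow> real" where
  "lamPF p = (1 - p + sqrt ((1 - p) * (3 * p + 1))) / 2"

definition lamr :: "real \<Rightarrow> real" where
  "lamr p = (1 - p - sqrt ((1 - p) * (3 * p + 1))) / 2"

definition aconst :: "real \<Rightarrow> real" where
  "aconst p = lamr p / lamPF p"

definition gp :: "real \<Rightarrow> enat \<Rightarrow> real" where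
  "gp p k = (case k of
      enat n \<Rightarrow>
        (if n = 0 then 0
         else if n = 1 then 1 - p
         else ((-1) ^ (n + 1) * \<bar>aconst p\<bar> ^ n * (lamPF p / (1 - lamr p))
                 + lamPF p / (1 - lamPF p))
            / ((-1) ^ n * \<bar>aconst p\<bar> ^ (n - 1) * (1 / (1 - lamr p))
                 + 1 / (1 - lamPF p)))
    | \<infinity> \<Rightarrow> lamPF p)"

end

theory Submission
  imports Defs
begin

section \<open>Algebra of g_p\<close>

fun Zs :: "real \<Rightarrow> nat \<Rightarrow> real" where
  "Zs p 0 = 1"
| "Zs p (Suc 0) = 1"
| "Zs p (Suc (Suc k)) = (1 - p) * Zs p (Suc k) + p * (1 - p) * Zs p k"

definition Dk :: "real \<Rightarrow> nat \<Rightarrow> real" where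
  "Dk p k = lamPF p ^ k / (1 - lamPF p) - lamr p ^ k / (1 - lamr p)"

lemma auxN:
  fixes L R :: real assumes a: "L \<noteq> 0" "1 - L \<noteq> 0" "1 - R \<noteq> 0"
  shows "- ((R ^ Suc (Suc k) / L ^ Suc (Suc k)) * (L / (1 - R))) + L / (1 - L)
    = (L ^ Suc (Suc k) / (1 - L) - R ^ Suc (Suc k) / (1 - R)) / L ^ Suc k"
proof -
  have "(R ^ Suc (Suc k) / L ^ Suc (Suc k)) * (L / (1 - R)) = (R ^ Suc (Suc k) / (1 - R)) / L ^ Suc k"
    using a by (simp add: field_simps)
  moreover have "L / (1 - L) = (L ^ Suc (Suc k) / (1 - L)) / L ^ Suc k"
    using a by (simp add: field_simps)
  ultimately show ?thesis by (simp add: diff_divide_distrib)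
qed

lemma auxM:
  fixes L R :: real assumes a: "L \<noteq> 0" "1 - L \<noteq> 0" "1 - R \<noteq> 0"
  shows "- ((R ^ Suc k / L ^ Suc k) * (1 / (1 - R))) + 1 / (1 - L)
    = (L ^ Suc k / (1 - L) - R ^ Suc k / (1 - R)) / L ^ Suc k"
proof -
  have "(R ^ Suc k / L ^ Suc k) * (1 / (1 - R)) = (R ^ Suc k / (1 - R)) / L ^ Suc k"
    using a by (simp add: field_simps)
  moreover have "1 / (1 - L) = (L ^ Suc k / (1 - L)) / L ^ Suc k"
    using a by (simp add: field_simps)
  ultimately show ?thesis by (simp add: diff_divide_distrib)
qed

locale pp =
  fixes p :: real
  assumes p0: "0 < p" and p1: "p < 1"
begin

definition s where "s = sqrt ((1 - p) * (3 * p + 1))"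

lemma s_sq: "s^2 = (1 - p) * (3 * p + 1)"
  unfolding s_def using p0 p1 by (simp add: real_sqrt_pow2)

lemma s_pos: "s > 0" unfolding s_def using p0 p1 by simp

lemma lam_def': "lamPF p = (1 - p + s) / 2" "lamr p = (1 - p - s) / 2"
  unfolding lamPF_def lamr_def s_def by simp_all

lemma s_gt: "s > 1 - p"
proof -
  have "sqrt ((1 - p)^2) < s" unfolding s_def
    using p0 p1 by (intro real_sqrt_less_mono) (simp add: power2_eq_square algebra_simps)
  then show ?thesis using p1 by simp
qed

lemma s_lt: "s < 1 + p"
proof -
  have "s < sqrt ((1 + p)^2)" unfolding s_def
    using p0 p1 by (intro real_sqrt_less_mono) (simp add: power2_eq_square algebra_simps)
  then show ?thesis using p0 by simp
qed

lemma s_lt3: "s < 3 - p"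
  using s_lt p1 by simp

lemma lam_pos: "0 < lamPF p" and lam_lt1: "lamPF p < 1"
  and r_neg: "lamr p < 0" and r_gt: "-1 < lamr p"
  using s_pos s_gt s_lt s_lt3 p0 p1 by (auto simp: lam_def')

lemma lam_sum: "lamPF p + lamr p = 1 - p"
  unfolding lam_def' by (simp add: field_simps)

lemma lam_prod: "lamPF p * lamr p = - p * (1 - p)"
proof -
  have "lamPF p * lamr p = ((1 - p)^2 - s^2) / 4"
    unfolding lam_def' by (simp add: power2_eq_square field_simps)
  also have "\<dots> = - p * (1 - p)" unfolding s_sq by (simp add: power2_eq_square field_simps)
  finally show ?thesis .
qed

lemma lam_root: "lamPF p ^ 2 = (1 - p) * lamPF p + p * (1 - p)"
proof -
  have "lamPF p ^ 2 = lamPF p * (lamPF p + lamr p) - lamPF p * lamr p"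
    by (simp add: power2_eq_square algebra_simps)
  then show ?thesis by (simp add: lam_sum lam_prod algebra_simps)
qed

lemma r_root: "lamr p ^ 2 = (1 - p) * lamr p + p * (1 - p)"
proof -
  have "lamr p ^ 2 = lamr p * (lamPF p + lamr p) - lamPF p * lamr p"
    by (simp add: power2_eq_square algebra_simps)
  then show ?thesis by (simp add: lam_sum lam_prod algebra_simps)
qed

lemma Dk_rec: "Dk p (Suc (Suc k)) = (1 - p) * Dk p (Suc k) + p * (1 - p) * Dk p k"
proof -
  let ?l = "lamPF p" and ?r = "lamr p"
  have a: "?l ^ Suc (Suc k) = (1 - p) * ?l ^ Suc k + p * (1 - p) * ?l ^ k"
  proof -
    have "?l ^ Suc (Suc k) = ?l^2 * ?l^k" by (simp add: power2_eq_square)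
    also have "\<dots> = (1 - p) * ?l ^ Suc k + p * (1 - p) * ?l ^ k" unfolding lam_root by (simp add: algebra_simps)
    finally show ?thesis .
  qed
  have b: "?r ^ Suc (Suc k) = (1 - p) * ?r ^ Suc k + p * (1 - p) * ?r ^ k"
  proof -
    have "?r ^ Suc (Suc k) = ?r^2 * ?r^k" by (simp add: power2_eq_square)
    also have "\<dots> = (1 - p) * ?r ^ Suc k + p * (1 - p) * ?r ^ k" unfolding r_root by (simp add: algebra_simps)
    finally show ?thesis .
  qed
  show ?thesis unfolding Dk_def a b by (simp add: diff_divide_distrib add_divide_distrib algebra_simps)
qed

lemma Dk01: "Dk p 1 = Dk p 0"
proof -
  have "1 - lamPF p \<noteq> 0" "1 - lamr p \<noteq> 0" using lam_lt1 r_neg by auto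
  then show ?thesis unfolding Dk_def by (simp add: field_simps)
qed

lemma Dk0_pos: "Dk p 0 > 0"
proof -
  have "1 / (1 - lamr p) < 1 / (1 - lamPF p)"
    using lam_lt1 r_neg lam_pos by (intro divide_strict_left_mono) auto
  then show ?thesis unfolding Dk_def by simp
qed

lemma Zs_Dk: "Zs p k * Dk p 0 = Dk p k"
proof (induction k rule: nat_less_induct)
  case (1 n)
  show ?case
  proof (cases n)
    case 0 then show ?thesis by simp
  next
    case (Suc m)
    show ?thesis
    proof (cases m)
      case 0 then show ?thesis using Suc Dk01 by simp
    next
      case (Suc k)
      have "Zs p m * Dk p 0 = Dk p m" "Zs p k * Dk p 0 = Dk p k"
        using 1 \<open>n = Suc m\<close> Suc by auto
      then show ?thesis using \<open>n = Suc m\<close> Suc Dk_rec[of k]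
        by (simp add: algebra_simps)
    qed
  qed
qed

lemma Zs_pos_ge: "Zs p k > 0 \<and> (1 - p) * Zs p k \<le> Zs p (Suc k)"
proof (induction k rule: nat_less_induct)
  case (1 n)
  show ?case
  proof (cases n)
    case 0 then show ?thesis using p0 p1 by simp
  next
    case (Suc m)
    show ?thesis
    proof (cases m)
      case 0 then show ?thesis using Suc p0 p1 by (simp add: algebra_simps)
    next
      case (Suc k)
      have a: "Zs p m > 0" "Zs p k > 0"
        using 1 \<open>n = Suc m\<close> Suc by auto
      have "Zs p n > 0" using a \<open>n = Suc m\<close> Suc p0 p1 by (simp add: add_pos_pos)
      moreover have "(1 - p) * Zs p n \<le> Zs p (Suc n)"
      proof -
        have "0 \<le> p * (1 - p) * Zs p m" using a p0 p1 by simp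
        then show ?thesis using \<open>n = Suc m\<close> by simp
      qed
      ultimately show ?thesis by simp
    qed
  qed
qed

lemma Zs_pos: "Zs p k > 0" using Zs_pos_ge by blast

lemma Zs_mono: "Zs p (Suc k) \<le> Zs p k"
proof (cases k)
  case 0 then show ?thesis by simp
next
  case (Suc m)
  have "(1 - p) * Zs p m \<le> Zs p (Suc m)" using Zs_pos_ge by blast
  then have "p * ((1 - p) * Zs p m) \<le> p * Zs p (Suc m)" using p0 by (intro mult_left_mono) auto
  then show ?thesis using Suc by (simp add: algebra_simps)
qed

lemma Zs_lim: "Zs p \<longlonglongrightarrow> 0"
proof -
  have "(\<lambda>k. Dk p k) \<longlonglongrightarrow> 0 / (1 - lamPF p) - 0 / (1 - lamr p)"
    unfolding Dk_def using lam_pos lam_lt1 r_neg r_gt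
    by (intro tendsto_intros LIMSEQ_power_zero) auto
  then have "(\<lambda>k. Dk p k / Dk p 0) \<longlonglongrightarrow> 0 / Dk p 0"
    using Dk0_pos by (intro tendsto_intros) auto
  moreover have "(\<lambda>k. Dk p k / Dk p 0) = Zs p"
    using Zs_Dk Dk0_pos by (auto simp: fun_eq_iff field_simps)
  ultimately show ?thesis by simp
qed

lemma sign_pow1: "(-1::real) ^ (Suc n) * (- x) ^ n = - (x ^ n)"
proof -
  have "(-1::real) ^ n * (- x) ^ n = ((-1) * (- x)) ^ n" by (rule power_mult_distrib[symmetric])
  then have "(-1::real) ^ n * (- x) ^ n = x ^ n" by simp
  then show ?thesis by simp
qed


lemma gp_enat: "gp p (enat (Suc (Suc k))) = Zs p (Suc (Suc k)) / Zs p (Suc k)"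
proof -
  let ?l = "lamPF p" and ?r = "lamr p"
  define n where "n = Suc (Suc k)"
  have abs_a: "\<bar>aconst p\<bar> = - (?r / ?l)"
    unfolding aconst_def using lam_pos r_neg by (simp add: abs_if divide_neg_pos)
  have l0: "?l \<noteq> 0" "1 - ?l \<noteq> 0" "1 - ?r \<noteq> 0" using lam_pos lam_lt1 r_neg by auto
  have N: "(-1) ^ (n + 1) * \<bar>aconst p\<bar> ^ n * (?l / (1 - ?r)) + ?l / (1 - ?l)
        = Dk p n / ?l ^ (Suc k)"
  proof -
    have "(-1) ^ (n + 1) * \<bar>aconst p\<bar> ^ n = - ((?r / ?l) ^ n)"
      unfolding abs_a using sign_pow1[of n "?r / ?l"] by simp
    then have "(-1) ^ (n + 1) * \<bar>aconst p\<bar> ^ n * (?l / (1 - ?r)) + ?l / (1 - ?l)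
        = - ((?r ^ n / ?l ^ n) * (?l / (1 - ?r))) + ?l / (1 - ?l)"
      by (simp add: power_divide)
    also have "\<dots> = Dk p n / ?l ^ (Suc k)"
      unfolding Dk_def n_def using auxN[OF l0] .
    finally show ?thesis .
  qed
  have M: "(-1) ^ n * \<bar>aconst p\<bar> ^ (n - 1) * (1 / (1 - ?r)) + 1 / (1 - ?l)
        = Dk p (Suc k) / ?l ^ (Suc k)"
  proof -
    have "(-1) ^ n * \<bar>aconst p\<bar> ^ (n - 1) = - ((?r / ?l) ^ (Suc k))"
      unfolding abs_a n_def using sign_pow1[of "Suc k" "?r / ?l"] by simp
    then have "(-1) ^ n * \<bar>aconst p\<bar> ^ (n - 1) * (1 / (1 - ?r)) + 1 / (1 - ?l)
        = - ((?r ^ Suc k / ?l ^ Suc k) * (1 / (1 - ?r))) + 1 / (1 - ?l)"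
      by (simp add: power_divide)
    also have "\<dots> = Dk p (Suc k) / ?l ^ (Suc k)"
      unfolding Dk_def using auxM[OF l0] .
    finally show ?thesis .
  qed
  have "gp p (enat n) = ((-1) ^ (n + 1) * \<bar>aconst p\<bar> ^ n * (?l / (1 - ?r)) + ?l / (1 - ?l))
     / ((-1) ^ n * \<bar>aconst p\<bar> ^ (n - 1) * (1 / (1 - ?r)) + 1 / (1 - ?l))"
    unfolding gp_def by (simp add: n_def)
  also have "\<dots> = (Dk p n / ?l ^ (Suc k)) / (Dk p (Suc k) / ?l ^ (Suc k))"
    unfolding N M ..
  also have "\<dots> = Dk p n / Dk p (Suc k)" using l0 by simp
  also have "\<dots> = (Zs p n * Dk p 0) / (Zs p (Suc k) * Dk p 0)"
    by (simp only: Zs_Dk)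
  also have "\<dots> = Zs p n / Zs p (Suc k)"
    using Dk0_pos by simp
  finally show ?thesis by (simp add: n_def)
qed

lemma gp_range: "0 \<le> gp p k \<and> gp p k \<le> 1"
proof (cases k)
  case (enat n)
  show ?thesis
  proof (cases n)
    case 0 then show ?thesis using enat by (simp add: gp_def)
  next
    case (Suc m)
    show ?thesis
    proof (cases m)
      case 0 then show ?thesis using enat Suc p0 p1 by (simp add: gp_def)
    next
      case (Suc j)
      have "gp p k = Zs p (Suc (Suc j)) / Zs p (Suc j)"
        using enat \<open>n = Suc m\<close> Suc gp_enat by simp
      then show ?thesis using Zs_pos[of "Suc j"] Zs_pos[of "Suc (Suc j)"] Zs_mono[of "Suc j"]
        by simp
    qed
  qed
next
  case infinity then show ?thesis using lam_pos lam_lt1 by (simp add: gp_def)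
qed

end

section \<open>Combinatorics of configurations\<close>

definition valid :: "(int \<Rightarrow> bool) \<Rightarrow> bool" where
  "valid \<omega> \<longleftrightarrow> (\<forall>i. \<omega> i \<longrightarrow> \<omega> (i - 1) \<or> \<omega> (i + 1))"

lemma valid_Tmap: "valid (Tmap \<omega>)"
  unfolding valid_def Tmap_def by auto

lemma Tmap_id: "valid \<omega> \<Longrightarrow> Tmap \<omega> = \<omega>"
  unfolding valid_def Tmap_def by (auto simp: fun_eq_iff)

lemma Omega'_valid: "Omega' = {\<omega>. valid \<omega>}"
proof
  show "Omega' \<subseteq> {\<omega>. valid \<omega>}" unfolding Omega'_def using valid_Tmap by auto
  show "{\<omega>. valid \<omega>} \<subseteq> Omega'"
  proof
    fix x assume "x \<in> {\<omega>. valid \<omega>}"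
    then have "x = Tmap x" using Tmap_id by simp
    then show "x \<in> Omega'" unfolding Omega'_def by (metis rangeI)
  qed
qed

lemma in_Omega'[simp]: "\<omega> \<in> Omega' \<longleftrightarrow> valid \<omega>"
  unfolding Omega'_valid by simp

definition ub :: "int \<Rightarrow> (int \<Rightarrow> bool) \<Rightarrow> bool \<Rightarrow> bool" where
  "ub j \<eta> b \<longleftrightarrow> b \<or> (\<eta> (j - 1) \<and> \<not> \<eta> (j - 2))"

definition upd :: "int \<Rightarrow> (int \<Rightarrow> bool) \<Rightarrow> bool \<Rightarrow> (int \<Rightarrow> bool)" where
  "upd j \<eta> b = (\<lambda>i. if i < j then \<eta> i else if i = j then ub j \<eta> b
      else if i = j + 1 then ub j \<eta> b \<and> \<not> \<eta> (j - 1) else False)"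

lemma upd_below: "i < j \<Longrightarrow> upd j \<eta> b i = \<eta> i"
  unfolding upd_def by simp

lemma upd_at: "upd j \<eta> b j = ub j \<eta> b"
  unfolding upd_def by simp

lemma valid_upd: "valid \<eta> \<Longrightarrow> valid (upd j \<eta> b)"
  unfolding valid_def
proof (intro allI impI)
  fix i assume v: "\<forall>i. \<eta> i \<longrightarrow> \<eta> (i - 1) \<or> \<eta> (i + 1)" and u: "upd j \<eta> b i"
  consider "i < j - 1" | "i = j - 1" | "i = j" | "i = j + 1" | "i > j + 1" by linarith
  then show "upd j \<eta> b (i - 1) \<or> upd j \<eta> b (i + 1)"
  proof cases
    case 1 then show ?thesis using u v[rule_format, of i] by (auto simp: upd_def)
  next
    case 2 then show ?thesis using u by (auto simp: upd_def ub_def)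
  next
    case 3 then show ?thesis using u by (auto simp: upd_def ub_def)
  next
    case 4 then show ?thesis using u by (auto simp: upd_def ub_def)
  next
    case 5 then show ?thesis using u by (auto simp: upd_def ub_def)
  qed
qed

lemma ub_self: assumes "valid \<eta>" shows "ub j \<eta> (\<eta> j) = \<eta> j"
proof -
  have "\<eta> (j - 1) \<longrightarrow> \<eta> (j - 1 - 1) \<or> \<eta> (j - 1 + 1)" using assms unfolding valid_def by blast
  then have "\<eta> (j - 1) \<longrightarrow> \<eta> (j - 2) \<or> \<eta> j" by simp
  then show ?thesis unfolding ub_def by blast
qed

lemma upd_self: "valid \<eta> \<Longrightarrow> i \<le> j \<Longrightarrow> upd j \<eta> (\<eta> j) i = \<eta> i"
  using ub_self[of \<eta> j] unfolding upd_def by auto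

lemma upd_cong: "(\<And>i. i < j \<Longrightarrow> \<eta> i = \<eta>' i) \<Longrightarrow> upd j \<eta> b = upd j \<eta>' b"
  unfolding upd_def ub_def by (auto simp: fun_eq_iff)

lemma shift_apply[simp]: "shift i \<omega> j = \<omega> (j + i)"
  unfolding shift_def by simp

lemma shift_upd: "shift i (upd i \<eta> b) = upd 0 (shift i \<eta>) b"
  unfolding upd_def ub_def shift_def by (auto simp: fun_eq_iff algebra_simps)

lemma shift_shift: "shift i (shift j \<omega>) = shift (i + j) \<omega>"
  unfolding shift_def by (auto simp: fun_eq_iff algebra_simps)

lemma shift_0[simp]: "shift 0 \<omega> = \<omega>"
  unfolding shift_def by simp

lemma shift_inj: assumes "shift i x = shift i y" shows "x = y"
proof
  fix k
  have "shift i x (k - i) = shift i y (k - i)" using assms by simp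
  then show "x k = y k" by simp
qed

lemma valid_shift: "valid (shift i \<omega>) \<longleftrightarrow> valid \<omega>"
proof
  assume v: "valid (shift i \<omega>)"
  show "valid \<omega>" unfolding valid_def
  proof (intro allI impI)
    fix k assume "\<omega> k"
    then have "shift i \<omega> (k - i)" by simp
    then have "shift i \<omega> (k - i - 1) \<or> shift i \<omega> (k - i + 1)" using v unfolding valid_def by blast
    then show "\<omega> (k - 1) \<or> \<omega> (k + 1)" by (simp add: algebra_simps)
  qed
next
  assume v: "valid \<omega>"
  show "valid (shift i \<omega>)" unfolding valid_def
  proof (intro allI impI)
    fix k assume "shift i \<omega> k"
    then have "\<omega> (k + i)" by simp
    then have "\<omega> (k + i - 1) \<or> \<omega> (k + i + 1)" using v unfolding valid_def by blast
    then show "shift i \<omega> (k - 1) \<or> shift i \<omega> (k + 1)" by (simp add: algebra_simps)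
  qed
qed

lemma nfun_cong: "(\<And>i. i < 0 \<Longrightarrow> \<eta> i = \<eta>' i) \<Longrightarrow> nfun \<eta> = nfun \<eta>'"
proof -
  assume a: "\<And>i. i < 0 \<Longrightarrow> \<eta> i = \<eta>' i"
  have e: "\<And>i::nat. i \<ge> 1 \<Longrightarrow> (\<eta> (- int i - 1) \<and> \<eta> (- int i)) = (\<eta>' (- int i - 1) \<and> \<eta>' (- int i))"
    using a by auto
  have e2: "(\<lambda>i::nat. i \<ge> 1 \<and> \<eta> (- int i - 1) \<and> \<eta> (- int i)) = (\<lambda>i. i \<ge> 1 \<and> \<eta>' (- int i - 1) \<and> \<eta>' (- int i))"
    using e by auto
  show ?thesis unfolding nfun_def e2 using a[of "-1"] a[of "-2"] by simp
qed

lemma nfun_shift_cong: "(\<And>i. i < j \<Longrightarrow> \<eta> i = \<eta>' i) \<Longrightarrow> nfun (shift j \<eta>) = nfun (shift j \<eta>')"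
  by (rule nfun_cong) auto

lemma nfun_0_iff: "nfun \<omega> = 0 \<longleftrightarrow> \<not> \<omega> (-2) \<and> \<omega> (-1)"
proof -
  have "(LEAST i::nat. i \<ge> 1 \<and> \<omega> (- int i - 1) \<and> \<omega> (- int i)) \<noteq> 0"
    if "\<exists>i::nat. i \<ge> 1 \<and> \<omega> (- int i - 1) \<and> \<omega> (- int i)"
    using that by (metis (mono_tags, lifting) LeastI_ex not_one_le_zero)
  then show ?thesis unfolding nfun_def by (auto simp: zero_enat_def)
qed

lemma nfun_le: "i \<ge> 1 \<Longrightarrow> \<omega> (- int i - 1) \<Longrightarrow> \<omega> (- int i) \<Longrightarrow> nfun \<omega> \<le> enat i"
  unfolding nfun_def by (auto intro: Least_le simp: zero_enat_def)

lemma nfun_enat_iff: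
  assumes "n \<ge> 1"
  shows "nfun \<omega> = enat n \<longleftrightarrow> \<not> (\<not> \<omega> (-2) \<and> \<omega> (-1)) \<and> \<omega> (- int n - 1) \<and> \<omega> (- int n)
     \<and> (\<forall>k::nat. 1 \<le> k \<and> k < n \<longrightarrow> \<not> (\<omega> (- int k - 1) \<and> \<omega> (- int k)))"
proof
  assume h: "nfun \<omega> = enat n"
  have ex: "\<exists>i::nat. i \<ge> 1 \<and> \<omega> (- int i - 1) \<and> \<omega> (- int i)"
    using h assms unfolding nfun_def by (auto split: if_splits simp: zero_enat_def)
  have nz: "\<not> (\<not> \<omega> (-2) \<and> \<omega> (-1))"
    using h assms unfolding nfun_def by (auto split: if_splits simp: zero_enat_def)
  have L: "(LEAST i::nat. i \<ge> 1 \<and> \<omega> (- int i - 1) \<and> \<omega> (- int i)) = n"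
    using h ex nz unfolding nfun_def by simp
  show "\<not> (\<not> \<omega> (-2) \<and> \<omega> (-1)) \<and> \<omega> (- int n - 1) \<and> \<omega> (- int n)
     \<and> (\<forall>k::nat. 1 \<le> k \<and> k < n \<longrightarrow> \<not> (\<omega> (- int k - 1) \<and> \<omega> (- int k)))"
    using LeastI_ex[OF ex] not_less_Least[where P="\<lambda>i::nat. i \<ge> 1 \<and> \<omega> (- int i - 1) \<and> \<omega> (- int i)"]
    unfolding L using nz by blast
next
  assume h: "\<not> (\<not> \<omega> (-2) \<and> \<omega> (-1)) \<and> \<omega> (- int n - 1) \<and> \<omega> (- int n)
     \<and> (\<forall>k::nat. 1 \<le> k \<and> k < n \<longrightarrow> \<not> (\<omega> (- int k - 1) \<and> \<omega> (- int k)))"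
  have "(LEAST i::nat. i \<ge> 1 \<and> \<omega> (- int i - 1) \<and> \<omega> (- int i)) = n"
    using h assms by (intro Least_equality) (auto simp: not_less[symmetric])
  then show "nfun \<omega> = enat n" using h assms unfolding nfun_def by auto
qed

section \<open>Sigma algebras\<close>

definition Gm :: "int \<Rightarrow> (int \<Rightarrow> bool) set set" where
  "Gm m = {{\<omega>. \<omega> i} | i. i \<le> m}"

lemma Fle_eq: "Fle m = restrict_space (sigma UNIV (Gm m)) Omega'"
  unfolding Fle_def Gm_def ..

lemma space_Fle[simp]: "space (Fle m) = Omega'"
  unfolding Fle_eq by (simp add: space_restrict_space)

lemma space_F'[simp]: "space F' = Omega'"
  unfolding F'_def Mfull_def by (simp add: space_restrict_space space_PiM)

lemma space_Mfull[simp]: "space Mfull = UNIV"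
  unfolding Mfull_def by (simp add: space_PiM)

lemma sets_Fle: "sets (Fle m) = (\<lambda>A. Omega' \<inter> A) ` sigma_sets UNIV (Gm m)"
  unfolding Fle_eq by (simp add: sets_restrict_space)

lemma sigma_cyl:
  assumes "B \<in> sigma_sets UNIV (Gm m)" "\<And>j. j \<le> m \<Longrightarrow> x j = y j"
  shows "x \<in> B \<longleftrightarrow> y \<in> B"
  using assms(1)
proof induction
  case (Basic a) then show ?case using assms(2) by (auto simp: Gm_def)
next
  case Empty then show ?case by simp
next
  case (Compl a) then show ?case by simp
next
  case (Union a) then show ?case by simp
qed

lemma Fle_cyl:
  assumes "A \<in> sets (Fle m)" "\<And>j. j \<le> m \<Longrightarrow> x j = y j" "valid x" "valid y"
  shows "x \<in> A \<longleftrightarrow> y \<in> A"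
proof -
  obtain B where B: "B \<in> sigma_sets UNIV (Gm m)" "A = Omega' \<inter> B"
    using assms(1) unfolding sets_Fle by auto
  show ?thesis using sigma_cyl[OF B(1) assms(2)] B(2) assms(3,4) by auto
qed

lemma Fle_fun_cyl:
  fixes f :: "(int \<Rightarrow> bool) \<Rightarrow> real"
  assumes "f \<in> borel_measurable (Fle m)" "\<And>j. j \<le> m \<Longrightarrow> x j = y j" "valid x" "valid y"
  shows "f x = f y"
proof -
  have "f -` {f x} \<inter> space (Fle m) \<in> sets (Fle m)"
    using assms(1) by (rule borel_measurable_vimage)
  then have A: "f -` {f x} \<inter> Omega' \<in> sets (Fle m)" by simp
  have "x \<in> f -` {f x} \<inter> Omega' \<longleftrightarrow> y \<in> f -` {f x} \<inter> Omega'"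
    by (rule Fle_cyl[OF A assms(2-4)])
  moreover have "x \<in> f -` {f x} \<inter> Omega'" using assms(3) by simp
  ultimately have "y \<in> f -` {f x}" by blast
  then show ?thesis by simp
qed

lemma measurable_FleI:
  assumes "f \<in> space M \<rightarrow> Omega'" "\<And>j. j \<le> m \<Longrightarrow> {x \<in> space M. f x j} \<in> sets M"
  shows "f \<in> measurable M (Fle m)"
  unfolding Fle_eq
proof (rule measurable_restrict_space2[OF assms(1)])
  show "f \<in> measurable M (sigma UNIV (Gm m))"
  proof (rule measurable_measure_of)
    fix y assume "y \<in> Gm m"
    then obtain i where "i \<le> m" "y = {\<omega>. \<omega> i}" unfolding Gm_def by auto
    moreover have "f -` {\<omega>. \<omega> i} \<inter> space M = {x \<in> space M. f x i}" by auto
    ultimately show "f -` y \<inter> space M \<in> sets M" using assms(2) by simp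
  qed auto
qed

lemma Fle_coord: "j \<le> m \<Longrightarrow> {x \<in> space (Fle m). x j} \<in> sets (Fle m)"
proof -
  assume "j \<le> m"
  then have "{\<omega>. \<omega> j} \<in> sigma_sets UNIV (Gm m)" unfolding Gm_def by (auto intro: sigma_sets.Basic)
  then have "Omega' \<inter> {\<omega>. \<omega> j} \<in> sets (Fle m)" unfolding sets_Fle by auto
  moreover have "{x \<in> space (Fle m). x j} = Omega' \<inter> {\<omega>. \<omega> j}" by auto
  ultimately show ?thesis by simp
qed

lemma fin_dep_sets:
  fixes M :: "(int \<Rightarrow> bool) measure"
  assumes "finite S" "\<And>i. i \<in> S \<Longrightarrow> {x \<in> space M. x i} \<in> sets M"
    "\<And>x y. (\<And>i. i \<in> S \<Longrightarrow> x i = y i) \<Longrightarrow> P x = P y"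
  shows "{x \<in> space M. P x} \<in> sets M"
  using assms
proof (induction S arbitrary: P rule: finite_induct)
  case empty
  then have e: "\<And>x. P x = P undefined" by blast
  have "{x \<in> space M. P x} = (if P undefined then space M else {})"
    using e by auto
  then show ?case by simp
next
  case (insert a S)
  note co = insert.prems(1) and de = insert.prems(2)
  define P1 where "P1 = (\<lambda>x. P (x(a := True)))"
  define P0 where "P0 = (\<lambda>x. P (x(a := False)))"
  have co': "\<And>i. i \<in> S \<Longrightarrow> {x \<in> space M. x i} \<in> sets M" using co by blast
  have de1: "P1 x = P1 y" if "\<And>i. i \<in> S \<Longrightarrow> x i = y i" for x y
    unfolding P1_def by (rule de) (use that in auto)
  have de0: "P0 x = P0 y" if "\<And>i. i \<in> S \<Longrightarrow> x i = y i" for x y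
    unfolding P0_def by (rule de) (use that in auto)
  have d1: "{x \<in> space M. P1 x} \<in> sets M"
    by (rule insert.IH[OF co' de1]) 
  have d0: "{x \<in> space M. P0 x} \<in> sets M"
    by (rule insert.IH[OF co' de0])
  have ca: "{x \<in> space M. x a} \<in> sets M" using co by blast
  have pe: "P x = (if x a then P1 x else P0 x)" for x
    unfolding P1_def P0_def by (cases "x a") (simp_all add: fun_upd_idem)
  have eq: "{x \<in> space M. P x} = ({x \<in> space M. x a} \<inter> {x \<in> space M. P1 x})
      \<union> ((space M - {x \<in> space M. x a}) \<inter> {x \<in> space M. P0 x})"
    using pe by auto
  show ?case unfolding eq using d1 d0 ca by auto
qed

lemma Mfull_coord: "{x \<in> space Mfull. x j} \<in> sets Mfull"
proof -
  have "(\<lambda>x. x j) \<in> measurable Mfull (count_space UNIV)"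
    unfolding Mfull_def by (rule measurable_component_singleton) simp
  then have "(\<lambda>x. x j) -` {True} \<inter> space Mfull \<in> sets Mfull" by (rule measurable_sets) simp
  then show ?thesis by (simp add: vimage_def Int_def)
qed

lemma measurable_MfullI:
  assumes "\<And>j. {x \<in> space M. f x j} \<in> sets M"
  shows "f \<in> measurable M Mfull"
proof -
  have "(\<lambda>x i. f x i) \<in> measurable M (Pi\<^sub>M UNIV (\<lambda>_::int. count_space (UNIV::bool set)))"
  proof (rule measurable_PiM_single')
    fix i :: int
    show "(\<lambda>x. f x i) \<in> measurable M (count_space UNIV)"
    proof (rule measurable_count_space_eq2_countable[THEN iffD2], intro conjI ballI)
      fix b :: bool
      show "(\<lambda>x. f x i) -` {b} \<inter> space M \<in> sets M"
      proof (cases b)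
        case True
        have "(\<lambda>x. f x i) -` {True} \<inter> space M = {x \<in> space M. f x i}" by auto
        then show ?thesis using assms[of i] True by simp
      next
        case False
        have "(\<lambda>x. f x i) -` {False} \<inter> space M = space M - {x \<in> space M. f x i}" by auto
        then show ?thesis using assms[of i] False by auto
      qed
    qed simp
  qed (simp add: space_PiM)
  then show ?thesis unfolding Mfull_def by simp
qed

lemma Fle_dep_sets:
  assumes "finite S" "\<And>i. i \<in> S \<Longrightarrow> i \<le> m" "\<And>x y. (\<And>i. i \<in> S \<Longrightarrow> x i = y i) \<Longrightarrow> P x = P y"
  shows "{x \<in> Omega'. P x} \<in> sets (Fle m)"
proof -
  have "{x \<in> space (Fle m). P x} \<in> sets (Fle m)"
  proof (rule fin_dep_sets[OF assms(1)])
    show "\<And>i. i \<in> S \<Longrightarrow> {x \<in> space (Fle m). x i} \<in> sets (Fle m)"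
      by (rule Fle_coord) (rule assms(2))
    show "\<And>x y. (\<And>i. i \<in> S \<Longrightarrow> x i = y i) \<Longrightarrow> P x = P y" by (rule assms(3))
  qed
  then show ?thesis by simp
qed

lemma Mfull_dep_sets:
  assumes "finite S" "\<And>x y. (\<And>i. i \<in> S \<Longrightarrow> x i = y i) \<Longrightarrow> P x = P y"
  shows "{x. P x} \<in> sets Mfull"
proof -
  have "{x \<in> space Mfull. P x} \<in> sets Mfull"
  proof (rule fin_dep_sets[OF assms(1)])
    show "\<And>i. i \<in> S \<Longrightarrow> {x \<in> space Mfull. x i} \<in> sets Mfull"
      by (rule Mfull_coord)
    show "\<And>x y. (\<And>i. i \<in> S \<Longrightarrow> x i = y i) \<Longrightarrow> P x = P y" by (rule assms(2))
  qed
  then show ?thesis by simp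
qed

lemma Tmap_meas_Fle: "Tmap \<in> measurable Mfull (Fle m)"
proof (rule measurable_FleI)
  show "Tmap \<in> space Mfull \<rightarrow> Omega'" using valid_Tmap by auto
  fix j
  show "{x \<in> space Mfull. Tmap x j} \<in> sets Mfull"
    using Mfull_dep_sets[of "{j-1, j, j+1}" "\<lambda>x. Tmap x j"] by (simp add: Tmap_def)
qed

lemma id_meas_F'_Fle: "(\<lambda>x. x) \<in> measurable F' (Fle m)"
proof (rule measurable_FleI)
  show "(\<lambda>x. x) \<in> space F' \<rightarrow> Omega'" by simp
  fix j
  have "{x \<in> space Mfull. x j} \<in> sets Mfull" by (rule Mfull_coord)
  then have "Omega' \<inter> {x \<in> space Mfull. x j} \<in> sets F'"
    unfolding F'_def sets_restrict_space by auto
  moreover have "{x \<in> space F'. x j} = Omega' \<inter> {x \<in> space Mfull. x j}" by auto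
  ultimately show "{x \<in> space F'. x j} \<in> sets F'" by simp
qed

lemma Fle_borel_F': "f \<in> borel_measurable (Fle m) \<Longrightarrow> f \<in> borel_measurable F'"
  using measurable_comp[OF id_meas_F'_Fle] by (simp add: comp_def)

lemma id_meas_Fle_mono: "m \<le> m' \<Longrightarrow> (\<lambda>x. x) \<in> measurable (Fle m') (Fle m)"
  by (rule measurable_FleI) (auto intro: Fle_coord[simplified])

lemma Fle_borel_mono: "f \<in> borel_measurable (Fle m) \<Longrightarrow> m \<le> m' \<Longrightarrow> f \<in> borel_measurable (Fle m')"
  using measurable_comp[OF id_meas_Fle_mono] by (simp add: comp_def)

lemma Tmap_meas_Mfull: "Tmap \<in> measurable Mfull Mfull"
proof (rule measurable_MfullI)
  fix j
  show "{x \<in> space Mfull. Tmap x j} \<in> sets Mfull"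
    using Mfull_dep_sets[of "{j-1, j, j+1}" "\<lambda>x. Tmap x j"] by (simp add: Tmap_def)
qed

lemma Tmap_meas_F': "Tmap \<in> measurable Mfull F'"
  unfolding F'_def
  by (rule measurable_restrict_space2) (auto simp: valid_Tmap Tmap_meas_Mfull)

lemma upd_meas: "(\<lambda>\<omega>. upd j \<omega> b) \<in> measurable (Fle (j - 1)) (Fle m)"
proof (rule measurable_FleI)
  show "(\<lambda>\<omega>. upd j \<omega> b) \<in> space (Fle (j - 1)) \<rightarrow> Omega'" using valid_upd by auto
  fix i
  have "{x \<in> Omega'. upd j x b i} \<in> sets (Fle (j - 1))"
  proof (rule Fle_dep_sets[of "{j - 2, j - 1} \<union> ({i} \<inter> {..<j})"])
    fix x y :: "int \<Rightarrow> bool"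
    assume a: "\<And>k. k \<in> {j - 2, j - 1} \<union> ({i} \<inter> {..<j}) \<Longrightarrow> x k = y k"
    then have "x (j - 1) = y (j - 1)" "x (j - 2) = y (j - 2)" by auto
    moreover have "i < j \<Longrightarrow> x i = y i" using a by auto
    ultimately show "upd j x b i = upd j y b i" unfolding upd_def ub_def by simp
  qed auto
  then show "{x \<in> space (Fle (j - 1)). upd j x b i} \<in> sets (Fle (j - 1))" by simp
qed

lemma shift_meas: "shift k \<in> measurable (Fle m) (Fle (m - k))"
proof (rule measurable_FleI)
  show "shift k \<in> space (Fle m) \<rightarrow> Omega'" using valid_shift by auto
  fix j assume "j \<le> m - k"
  then show "{x \<in> space (Fle m). shift k x j} \<in> sets (Fle m)"
    using Fle_coord[of "j + k" m] by simp
qed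

lemma nfun_enat_dep:
  assumes "n \<ge> 1" "\<And>k. j - int n - 1 \<le> k \<Longrightarrow> k \<le> j - 1 \<Longrightarrow> x k = y k"
  shows "(nfun (shift j x) = enat n) = (nfun (shift j y) = enat n)"
proof -
  have a1: "x (j - 2) = y (j - 2)" "x (j - 1) = y (j - 1)" "x (j - int n - 1) = y (j - int n - 1)"
    "x (j - int n) = y (j - int n)"
    using assms by auto
  have a2: "\<And>k::nat. 1 \<le> k \<Longrightarrow> k < n \<Longrightarrow> x (j - int k - 1) = y (j - int k - 1) \<and> x (j - int k) = y (j - int k)"
    using assms(2) by auto
  show ?thesis
    unfolding nfun_enat_iff[OF assms(1)] using a1 a2 by (auto simp: algebra_simps)
qed

lemma nfun_meas: "(\<lambda>\<omega>. nfun (shift j \<omega>)) \<in> measurable (Fle (j - 1)) (count_space UNIV)"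
proof (rule measurable_count_space_eq2_countable[THEN iffD2], intro conjI ballI)
  have fin: "{x \<in> Omega'. nfun (shift j x) = enat n} \<in> sets (Fle (j - 1))" for n
  proof (cases "n = 0")
    case True
    have "{x \<in> Omega'. nfun (shift j x) = enat n} = {x \<in> Omega'. \<not> x (j - 2) \<and> x (j - 1)}"
      using True by (auto simp: zero_enat_def[symmetric] nfun_0_iff algebra_simps)
    moreover have "{x \<in> Omega'. \<not> x (j - 2) \<and> x (j - 1)} \<in> sets (Fle (j - 1))"
      by (rule Fle_dep_sets[of "{j - 2, j - 1}"]) auto
    ultimately show ?thesis by simp
  next
    case False
    show ?thesis
    proof (rule Fle_dep_sets[of "{j - int n - 1 .. j - 1}"])
      fix x y :: "int \<Rightarrow> bool"
      assume "\<And>i. i \<in> {j - int n - 1..j - 1} \<Longrightarrow> x i = y i"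
      then show "(nfun (shift j x) = enat n) = (nfun (shift j y) = enat n)"
        using False by (intro nfun_enat_dep) auto
    qed auto
  qed
  fix v :: enat
  show "(\<lambda>\<omega>. nfun (shift j \<omega>)) -` {v} \<inter> space (Fle (j - 1)) \<in> sets (Fle (j - 1))"
  proof (cases v)
    case (enat n)
    have "(\<lambda>\<omega>. nfun (shift j \<omega>)) -` {v} \<inter> space (Fle (j - 1)) = {x \<in> Omega'. nfun (shift j x) = enat n}"
      using enat by auto
    then show ?thesis using fin[of n] by simp
  next
    case infinity
    have "(\<lambda>\<omega>. nfun (shift j \<omega>)) -` {v} \<inter> space (Fle (j - 1))
        = Omega' - (\<Union>n. {x \<in> Omega'. nfun (shift j x) = enat n})"
      using infinity by auto
    moreover have U: "(\<Union>n. {x \<in> Omega'. nfun (shift j x) = enat n}) \<in> sets (Fle (j - 1))"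
      using fin by (intro sets.countable_UN) auto
    moreover have "Omega' \<in> sets (Fle (j - 1))" using sets.top[of "Fle (j - 1)"] by simp
    ultimately show ?thesis by (metis (no_types, lifting) sets.Diff)
  qed
qed simp

lemma gfun_meas: "(\<lambda>\<omega>. gp p (nfun (shift j \<omega>))) \<in> borel_measurable (Fle (j - 1))"
  using measurable_compose[OF nfun_meas, of "gp p" borel] by simp

lemma prob_integral_bound:
  fixes f :: "'a \<Rightarrow> real"
  assumes "prob_space M" "f \<in> borel_measurable M" "\<And>x. x \<in> space M \<Longrightarrow> \<bar>f x\<bar> \<le> B"
  shows "\<bar>integral\<^sup>L M f\<bar> \<le> B"
proof -
  interpret prob_space M by fact
  have int: "integrable M f"
    by (rule integrable_const_bound[where B=B]) (use assms in auto)
  have "integral\<^sup>L M f \<le> B" using assms(3) by (intro integral_le_const int) (auto simp: abs_le_iff)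
  moreover have "integral\<^sup>L M (\<lambda>x. - f x) \<le> B" using assms(3)
    by (intro integral_le_const) (auto simp: abs_le_iff int)
  ultimately show ?thesis by (simp add: abs_le_iff)
qed

lemma integral_bind_pmf:
  fixes f :: "'b \<Rightarrow> real"
  assumes "\<And>x. \<bar>f x\<bar> \<le> B"
  shows "(\<integral>x. f x \<partial>measure_pmf (bind_pmf M N)) = (\<integral>x. (\<integral>y. f y \<partial>measure_pmf (N x)) \<partial>measure_pmf M)"
proof -
  have "(\<integral>x. f x \<partial>measure_pmf (bind_pmf M N)) = integral\<^sup>L (measure_pmf M \<bind> (\<lambda>x. measure_pmf (N x))) f"
    by (simp add: measure_pmf_bind)
  also have "\<dots> = (\<integral>x. integral\<^sup>L (measure_pmf (N x)) f \<partial>measure_pmf M)"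
  proof (rule integral_bind[where K="count_space UNIV" and B=B and B'=1])
    show "f \<in> borel_measurable (count_space UNIV)" by simp
    show "\<And>x. x \<in> space (count_space UNIV) \<Longrightarrow> \<bar>f x\<bar> \<le> B" using assms by simp
    show "(\<lambda>x. measure_pmf (N x)) \<in> measurable (measure_pmf M) (subprob_algebra (count_space UNIV))"
      by (simp add: measure_pmf_in_subprob_algebra)
    show "finite_measure (measure_pmf M)" by (rule measure_pmf.finite_measure_axioms)
    show "AE x in measure_pmf M. emeasure (measure_pmf (N x)) (space (measure_pmf (N x))) \<le> ennreal 1"
      by (simp add: measure_pmf.emeasure_space_1)
  qed
  finally show ?thesis .
qed

lemma pmf_integral_cong:
  "(\<And>x. x \<in> set_pmf M \<Longrightarrow> f x = g x) \<Longrightarrow> (\<integral>x. f x \<partial>measure_pmf M) = (\<integral>x. g x \<partial>measure_pmf M)"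
  by (intro integral_cong_AE) (auto simp: AE_measure_pmf_iff)

section \<open>The kernel\<close>

definition gg :: "real \<Rightarrow> int \<Rightarrow> (int \<Rightarrow> bool) \<Rightarrow> real" where
  "gg p j \<eta> = gp p (nfun (shift j \<eta>))"

definition step :: "real \<Rightarrow> int \<Rightarrow> (int \<Rightarrow> bool) \<Rightarrow> (int \<Rightarrow> bool) pmf" where
  "step p j \<eta> = map_pmf (upd j \<eta>) (bernoulli_pmf (1 - gg p j \<eta>))"

fun chain :: "real \<Rightarrow> int \<Rightarrow> nat \<Rightarrow> (int \<Rightarrow> bool) \<Rightarrow> (int \<Rightarrow> bool) pmf" where
  "chain p l 0 \<eta> = return_pmf \<eta>"
| "chain p l (Suc k) \<eta> = bind_pmf (step p l \<eta>) (chain p (l + 1) k)"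

definition fix0 :: "(int \<Rightarrow> bool) \<Rightarrow> (int \<Rightarrow> bool)" where
  "fix0 \<eta> = (if valid \<eta> then \<eta> else (\<lambda>_. False))"

definition rho :: "real \<Rightarrow> int \<Rightarrow> int \<Rightarrow> (int \<Rightarrow> bool) \<Rightarrow> (int \<Rightarrow> bool) measure" where
  "rho p l m \<omega> = distr (measure_pmf (chain p l (nat (m - l + 1)) \<omega>)) (Fle m) fix0"

lemma valid_False: "valid (\<lambda>_. False)" unfolding valid_def by simp

lemma fix0_valid: "valid (fix0 \<eta>)" unfolding fix0_def using valid_False by simp

lemma fix0_id: "valid \<eta> \<Longrightarrow> fix0 \<eta> = \<eta>" unfolding fix0_def by simp

lemma fix0_meas: "fix0 \<in> measurable (measure_pmf P) (Fle m)"
  by (rule measurable_FleI) (auto simp: fix0_valid)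

lemma rho_prob: "prob_space (rho p l m \<omega>)"
  unfolding rho_def by (rule prob_space.prob_space_distr[OF measure_pmf.prob_space_axioms fix0_meas])

lemma sets_rho[simp]: "sets (rho p l m \<omega>) = sets (Fle m)"
  unfolding rho_def by simp

lemma space_rho[simp]: "space (rho p l m \<omega>) = Omega'"
  unfolding rho_def by simp

lemma step_cong: "(\<And>i. i < j \<Longrightarrow> \<eta> i = \<eta>' i) \<Longrightarrow> step p j \<eta> = step p j \<eta>'"
proof -
  assume a: "\<And>i. i < j \<Longrightarrow> \<eta> i = \<eta>' i"
  have "upd j \<eta> = upd j \<eta>'" by (rule ext) (rule upd_cong[OF a])
  moreover have "nfun (shift j \<eta>) = nfun (shift j \<eta>')" by (rule nfun_shift_cong[OF a])
  ultimately show ?thesis unfolding step_def gg_def by simp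
qed

lemma chain_cong: "(\<And>i. i < l \<Longrightarrow> \<eta> i = \<eta>' i) \<Longrightarrow> chain p l (Suc k) \<eta> = chain p l (Suc k) \<eta>'"
  using step_cong[of l \<eta> \<eta>' p] by simp

lemma chain_add: "chain p l (a + b) \<omega> = bind_pmf (chain p l a \<omega>) (chain p (l + int a) b)"
proof (induction a arbitrary: l \<omega>)
  case 0 then show ?case by (simp add: bind_return_pmf)
next
  case (Suc a)
  have "chain p l (Suc a + b) \<omega> = bind_pmf (step p l \<omega>) (\<lambda>\<eta>. chain p (l + 1) (a + b) \<eta>)" by simp
  also have "\<dots> = bind_pmf (step p l \<omega>) (\<lambda>\<eta>. bind_pmf (chain p (l + 1) a \<eta>) (chain p (l + 1 + int a) b))"
    using Suc.IH by simp
  also have "\<dots> = bind_pmf (chain p l (Suc a) \<omega>) (chain p (l + int (Suc a)) b)"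
    by (simp add: bind_assoc_pmf algebra_simps)
  finally show ?case .
qed

context pp
begin

lemma gg_range: "0 \<le> gg p j \<eta>" "gg p j \<eta> \<le> 1"
  unfolding gg_def using gp_range by auto

lemma set_step: "set_pmf (step p j \<eta>) \<subseteq> {upd j \<eta> True, upd j \<eta> False}"
proof
  fix x assume "x \<in> set_pmf (step p j \<eta>)"
  then obtain b where "x = upd j \<eta> b" unfolding step_def by auto
  then show "x \<in> {upd j \<eta> True, upd j \<eta> False}" by (cases b) auto
qed

lemma set_step_forced: "\<eta> (j - 1) \<Longrightarrow> \<not> \<eta> (j - 2) \<Longrightarrow> set_pmf (step p j \<eta>) \<subseteq> {upd j \<eta> True}"
  unfolding step_def by (auto simp: upd_def ub_def)

lemma chain_supp:
  assumes "valid \<omega>" "\<xi> \<in> set_pmf (chain p l k \<omega>)"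
  shows "valid \<xi> \<and> (\<forall>i<l. \<xi> i = \<omega> i)"
  using assms
proof (induction k arbitrary: l \<omega>)
  case 0 then show ?case by simp
next
  case (Suc k)
  from Suc.prems obtain \<eta> where e: "\<eta> \<in> set_pmf (step p l \<omega>)" "\<xi> \<in> set_pmf (chain p (l + 1) k \<eta>)"
    by auto
  obtain b where b: "\<eta> = upd l \<omega> b" using e(1) set_step by blast
  have v: "valid \<eta>" using b valid_upd Suc.prems(1) by simp
  have "valid \<xi> \<and> (\<forall>i<l + 1. \<xi> i = \<eta> i)" by (rule Suc.IH[OF v e(2)])
  then show ?case using b by (auto simp: upd_below)
qed

lemma integral_step:
  "(\<integral>x. f x \<partial>measure_pmf (step p j \<eta>)) = f (upd j \<eta> True) * (1 - gg p j \<eta>) + f (upd j \<eta> False) * gg p j \<eta>"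
  unfolding step_def using gg_range[of j \<eta>] by simp

lemma integral_rho:
  fixes f :: "(int \<Rightarrow> bool) \<Rightarrow> real"
  assumes "f \<in> borel_measurable (Fle m)" "valid \<omega>"
  shows "integral\<^sup>L (rho p l m \<omega>) f = (\<integral>x. f x \<partial>measure_pmf (chain p l (nat (m - l + 1)) \<omega>))"
proof -
  have "integral\<^sup>L (rho p l m \<omega>) f = (\<integral>x. f (fix0 x) \<partial>measure_pmf (chain p l (nat (m - l + 1)) \<omega>))"
    unfolding rho_def by (rule integral_distr[OF fix0_meas assms(1)])
  also have "\<dots> = (\<integral>x. f x \<partial>measure_pmf (chain p l (nat (m - l + 1)) \<omega>))"
    by (rule pmf_integral_cong) (use chain_supp[OF assms(2)] fix0_id in auto)
  finally show ?thesis .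
qed

lemma integral_rho_single:
  fixes f :: "(int \<Rightarrow> bool) \<Rightarrow> real"
  assumes "f \<in> borel_measurable (Fle m)" "valid \<omega>"
  shows "integral\<^sup>L (rho p m m \<omega>) f = f (upd m \<omega> True) * (1 - gg p m \<omega>) + f (upd m \<omega> False) * gg p m \<omega>"
proof -
  have "chain p (m + 1) 0 = return_pmf" by (rule ext) simp
  then have "chain p m (nat (m - m + 1)) \<omega> = step p m \<omega>"
    by (simp add: bind_return_pmf')
  then show ?thesis using integral_rho[OF assms, of m] integral_step by simp
qed

lemma single_meas:
  fixes f :: "(int \<Rightarrow> bool) \<Rightarrow> real"
  assumes "f \<in> borel_measurable (Fle m)"
  shows "(\<lambda>\<eta>. integral\<^sup>L (rho p m m \<eta>) f) \<in> borel_measurable (Fle (m - 1))"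
proof -
  have "(\<lambda>\<eta>. f (upd m \<eta> True) * (1 - gg p m \<eta>) + f (upd m \<eta> False) * gg p m \<eta>) \<in> borel_measurable (Fle (m - 1))"
    using measurable_compose[OF upd_meas assms] gfun_meas[of p m] unfolding gg_def[abs_def]
    by measurable
  then show ?thesis
    by (rule measurable_cong[THEN iffD1, rotated]) (simp add: integral_rho_single[OF assms])
qed

lemma rho_bound:
  fixes f :: "(int \<Rightarrow> bool) \<Rightarrow> real"
  assumes "f \<in> borel_measurable (Fle m)" "\<And>x. \<bar>f x\<bar> \<le> B"
  shows "\<bar>integral\<^sup>L (rho p l m \<eta>) f\<bar> \<le> B"
proof -
  have "f \<in> borel_measurable (rho p l m \<eta>)"
    using assms(1) measurable_cong_sets[OF sets_rho refl, of p l m \<eta> borel] by metis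
  then show ?thesis using prob_integral_bound[OF rho_prob, of f p l m \<eta> B] assms by simp
qed

lemma rho_decomp:
  fixes f :: "(int \<Rightarrow> bool) \<Rightarrow> real"
  assumes f: "f \<in> borel_measurable (Fle m)" "\<And>x. \<bar>f x\<bar> \<le> B" and lm: "l < m" and v: "valid \<omega>"
  shows "integral\<^sup>L (rho p l m \<omega>) f = integral\<^sup>L (rho p l (m - 1) \<omega>) (\<lambda>\<eta>. integral\<^sup>L (rho p m m \<eta>) f)"
proof -
  define a where "a = nat (m - 1 - l + 1)"
  have na: "nat (m - l + 1) = a + 1" "l + int a = m" using lm by (auto simp: a_def)
  have "integral\<^sup>L (rho p l m \<omega>) f = (\<integral>x. f x \<partial>measure_pmf (chain p l (a + 1) \<omega>))"
    using integral_rho[OF f(1) v] na by simp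
  also have "\<dots> = (\<integral>\<eta>. (\<integral>x. f x \<partial>measure_pmf (chain p m 1 \<eta>)) \<partial>measure_pmf (chain p l a \<omega>))"
    unfolding chain_add na by (rule integral_bind_pmf[OF f(2)])
  also have "\<dots> = (\<integral>\<eta>. integral\<^sup>L (rho p m m \<eta>) f \<partial>measure_pmf (chain p l a \<omega>))"
  proof (rule pmf_integral_cong)
    fix \<eta> assume "\<eta> \<in> set_pmf (chain p l a \<omega>)"
    then have "valid \<eta>" using chain_supp[OF v] by blast
    then show "(\<integral>x. f x \<partial>measure_pmf (chain p m 1 \<eta>)) = integral\<^sup>L (rho p m m \<eta>) f"
      using integral_rho[OF f(1), of \<eta> m] by simp
  qed
  also have "\<dots> = integral\<^sup>L (rho p l (m - 1) \<omega>) (\<lambda>\<eta>. integral\<^sup>L (rho p m m \<eta>) f)"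
    using integral_rho[OF single_meas[OF f(1)] v, of l] by (simp add: a_def)
  finally show ?thesis .
qed

end

lemma space_mu'[simp]: "space (mu' p) = Omega'"
  unfolding mu'_def by simp

lemma sets_mu'[simp]: "sets (mu' p) = sets F'"
  unfolding mu'_def by simp

context pp
begin

lemma meas_gen:
  fixes f :: "(int \<Rightarrow> bool) \<Rightarrow> real"
  shows "nat (m - l) = k \<Longrightarrow> l \<le> m \<Longrightarrow> f \<in> borel_measurable (Fle m) \<Longrightarrow> (\<And>x. \<bar>f x\<bar> \<le> B)
    \<Longrightarrow> (\<lambda>\<omega>. integral\<^sup>L (rho p l m \<omega>) f) \<in> borel_measurable (Flt l)"
proof (induction k arbitrary: m f B)
  case 0
  then have "l = m" by simp
  then show ?case using single_meas[OF 0(3)] by (simp add: Flt_def)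
next
  case (Suc k)
  have lm: "l < m" using Suc.prems by simp
  define H where "H = (\<lambda>\<eta>. integral\<^sup>L (rho p m m \<eta>) f)"
  have Hm: "H \<in> borel_measurable (Fle (m - 1))" unfolding H_def by (rule single_meas[OF Suc.prems(3)])
  have Hb: "\<And>x. \<bar>H x\<bar> \<le> B" unfolding H_def by (rule rho_bound[OF Suc.prems(3,4)])
  have "(\<lambda>\<omega>. integral\<^sup>L (rho p l (m - 1) \<omega>) H) \<in> borel_measurable (Flt l)"
    by (rule Suc.IH[OF _ _ Hm Hb]) (use Suc.prems lm in auto)
  then show ?case
  proof (rule measurable_cong[THEN iffD1, rotated])
    fix \<omega> assume "\<omega> \<in> space (Flt l)"
    then have "valid \<omega>" by (simp add: Flt_def)
    then show "integral\<^sup>L (rho p l (m - 1) \<omega>) H = integral\<^sup>L (rho p l m \<omega>) f"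
      unfolding H_def using rho_decomp[OF Suc.prems(3,4) lm] by simp
  qed
qed

lemma consistency_from_C1:
  fixes f :: "(int \<Rightarrow> bool) \<Rightarrow> real"
  assumes C1: "\<And>i (f::(int \<Rightarrow> bool) \<Rightarrow> real) B. f \<in> borel_measurable (Fle i) \<Longrightarrow> (\<And>x. \<bar>f x\<bar> \<le> B) \<Longrightarrow>
      (\<integral>\<omega>. integral\<^sup>L (rho p i i \<omega>) f \<partial>mu' p) = (\<integral>\<omega>. f \<omega> \<partial>mu' p)"
  shows "nat (m - l) = k \<Longrightarrow> l \<le> m \<Longrightarrow> f \<in> borel_measurable (Fle m) \<Longrightarrow> (\<And>x. \<bar>f x\<bar> \<le> B)
    \<Longrightarrow> (\<integral>\<omega>. integral\<^sup>L (rho p l m \<omega>) f \<partial>mu' p) = (\<integral>\<omega>. f \<omega> \<partial>mu' p)"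
proof (induction k arbitrary: m f B)
  case 0
  then have "l = m" by simp
  then show ?case using C1[OF 0(3,4)] by simp
next
  case (Suc k)
  have lm: "l < m" using Suc.prems by simp
  define H where "H = (\<lambda>\<eta>. integral\<^sup>L (rho p m m \<eta>) f)"
  have Hm: "H \<in> borel_measurable (Fle (m - 1))" unfolding H_def by (rule single_meas[OF Suc.prems(3)])
  have Hb: "\<And>x. \<bar>H x\<bar> \<le> B" unfolding H_def by (rule rho_bound[OF Suc.prems(3,4)])
  have "(\<integral>\<omega>. integral\<^sup>L (rho p l m \<omega>) f \<partial>mu' p) = (\<integral>\<omega>. integral\<^sup>L (rho p l (m - 1) \<omega>) H \<partial>mu' p)"
  proof (rule Bochner_Integration.integral_cong[OF refl])
    fix \<omega> assume "\<omega> \<in> space (mu' p)"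
    then have "valid \<omega>" by simp
    then show "integral\<^sup>L (rho p l m \<omega>) f = integral\<^sup>L (rho p l (m - 1) \<omega>) H"
      unfolding H_def using rho_decomp[OF Suc.prems(3,4) lm] by simp
  qed
  also have "\<dots> = (\<integral>\<omega>. H \<omega> \<partial>mu' p)"
    by (rule Suc.IH[OF _ _ Hm Hb]) (use Suc.prems lm in auto)
  also have "\<dots> = (\<integral>\<omega>. f \<omega> \<partial>mu' p)"
    unfolding H_def by (rule C1[OF Suc.prems(3,4)])
  finally show ?case .
qed

lemma pmf_integral_const: "(\<integral>x. c \<partial>measure_pmf M) = (c::real)"
  by (simp add: measure_pmf.prob_space)

lemma rho_past:
  assumes B: "B \<in> sets (Flt l)" and lm: "l \<le> m" and v: "valid \<omega>"
  shows "measure (rho p l m \<omega>) B = indicator B \<omega>"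
proof -
  have B': "B \<in> sets (Fle (l - 1))" using B by (simp add: Flt_def)
  have Bs: "B \<subseteq> Omega'" using sets.sets_into_space[OF B'] by simp
  have im: "indicator B \<in> borel_measurable (Fle m)"
    using Fle_borel_mono[OF borel_measurable_indicator[OF B'], of m] lm by simp
  have "measure (rho p l m \<omega>) B = integral\<^sup>L (rho p l m \<omega>) (indicator B)"
    using Bs by (simp add: Int_absorb2)
  also have "\<dots> = (\<integral>x. indicator B x \<partial>measure_pmf (chain p l (nat (m - l + 1)) \<omega>))"
    by (rule integral_rho[OF im v])
  also have "\<dots> = (\<integral>x. indicator B \<omega> \<partial>measure_pmf (chain p l (nat (m - l + 1)) \<omega>))"
  proof (rule pmf_integral_cong)
    fix x assume "x \<in> set_pmf (chain p l (nat (m - l + 1)) \<omega>)"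
    then have x: "valid x" "\<And>i. i < l \<Longrightarrow> x i = \<omega> i" using chain_supp[OF v] by auto
    have "x \<in> B \<longleftrightarrow> \<omega> \<in> B" by (rule Fle_cyl[OF B']) (use x v in auto)
    then show "indicator B x = (indicator B \<omega> :: real)" by (simp add: indicator_def)
  qed
  also have "\<dots> = indicator B \<omega>" by (rule pmf_integral_const)
  finally show ?thesis .
qed

lemma rho_nest:
  fixes f :: "(int \<Rightarrow> bool) \<Rightarrow> real"
  assumes ll: "l' \<le> l" "l \<le> m" "m \<le> m'" and f: "f \<in> borel_measurable (Fle m)" "\<And>x. \<bar>f x\<bar> \<le> B"
    and v: "valid \<omega>"
  shows "integral\<^sup>L (rho p l' m' \<omega>) (\<lambda>\<eta>. integral\<^sup>L (rho p l m \<eta>) f) = integral\<^sup>L (rho p l' m' \<omega>) f"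
proof -
  define a where "a = nat (l - l')"
  define k where "k = nat (m - l + 1)"
  define c where "c = nat (m' - m)"
  have nn1: "nat (m' - l' + 1) = a + (k + c)" unfolding a_def k_def c_def using ll by arith
  have nn2: "l' + int a = l" unfolding a_def using ll by arith
  have nn3: "l + int k = m + 1" unfolding k_def using ll by arith
  have k'e: "k = Suc (nat (m - l))" unfolding k_def using ll by arith
  obtain k' where k': "k = Suc k'" using k'e by blast
  have c1: "chain p l' (a + (k + c)) \<omega> = bind_pmf (chain p l' a \<omega>) (chain p l (k + c))"
    using chain_add[of p l' a "k + c" \<omega>] nn2 by simp
  have c2: "\<And>\<eta>. chain p l (k + c) \<eta> = bind_pmf (chain p l k \<eta>) (chain p (m + 1) c)"
    using chain_add[of p l k c] nn3 by simp
  define F where "F = (\<lambda>\<eta>. integral\<^sup>L (rho p l m \<eta>) f)"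
  have Fm: "F \<in> borel_measurable (Fle m')"
  proof -
    have "F \<in> borel_measurable (Flt l)" unfolding F_def by (rule meas_gen[OF refl ll(2) f])
    then have "F \<in> borel_measurable (Fle (l - 1))" unfolding Flt_def .
    then show ?thesis by (rule Fle_borel_mono) (use ll in linarith)
  qed
  have Fb: "\<And>x. \<bar>F x\<bar> \<le> B" unfolding F_def by (rule rho_bound[OF f])
  define G where "G = (\<lambda>\<eta>. (\<integral>x. f x \<partial>measure_pmf (chain p l k \<eta>)))"
  have fm': "f \<in> borel_measurable (Fle m')" using Fle_borel_mono[OF f(1) ll(3)] .
  have "integral\<^sup>L (rho p l' m' \<omega>) F = (\<integral>\<theta>. F \<theta> \<partial>measure_pmf (chain p l' (a + (k + c)) \<omega>))"
    using integral_rho[OF Fm v, of l'] nn1 by simp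
  also have "\<dots> = (\<integral>\<eta>. (\<integral>\<theta>. F \<theta> \<partial>measure_pmf (chain p l (k + c) \<eta>)) \<partial>measure_pmf (chain p l' a \<omega>))"
    unfolding c1 by (rule integral_bind_pmf[OF Fb])
  also have "\<dots> = (\<integral>\<eta>. G \<eta> \<partial>measure_pmf (chain p l' a \<omega>))"
  proof (rule pmf_integral_cong)
    fix \<eta> assume "\<eta> \<in> set_pmf (chain p l' a \<omega>)"
    then have v\<eta>: "valid \<eta>" using chain_supp[OF v] by blast
    have "(\<integral>\<theta>. F \<theta> \<partial>measure_pmf (chain p l (k + c) \<eta>)) = (\<integral>\<theta>. G \<eta> \<partial>measure_pmf (chain p l (k + c) \<eta>))"
    proof (rule pmf_integral_cong)
      fix \<theta> assume "\<theta> \<in> set_pmf (chain p l (k + c) \<eta>)"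
      then have t: "valid \<theta>" "\<And>i. i < l \<Longrightarrow> \<theta> i = \<eta> i" using chain_supp[OF v\<eta>] by auto
      have "F \<theta> = (\<integral>x. f x \<partial>measure_pmf (chain p l k \<theta>))"
        unfolding F_def k_def by (rule integral_rho[OF f(1) t(1)])
      also have "chain p l k \<theta> = chain p l k \<eta>" unfolding k' by (rule chain_cong[OF t(2)])
      finally show "F \<theta> = G \<eta>" unfolding G_def .
    qed
    also have "\<dots> = G \<eta>" by (rule pmf_integral_const)
    finally show "(\<integral>\<theta>. F \<theta> \<partial>measure_pmf (chain p l (k + c) \<eta>)) = G \<eta>" .
  qed
  also have "\<dots> = (\<integral>\<eta>. (\<integral>\<theta>. f \<theta> \<partial>measure_pmf (chain p l (k + c) \<eta>)) \<partial>measure_pmf (chain p l' a \<omega>))"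
  proof (rule pmf_integral_cong)
    fix \<eta> assume "\<eta> \<in> set_pmf (chain p l' a \<omega>)"
    then have v\<eta>: "valid \<eta>" using chain_supp[OF v] by blast
    have "(\<integral>\<theta>. f \<theta> \<partial>measure_pmf (chain p l (k + c) \<eta>))
        = (\<integral>\<xi>. (\<integral>\<zeta>. f \<zeta> \<partial>measure_pmf (chain p (m + 1) c \<xi>)) \<partial>measure_pmf (chain p l k \<eta>))"
      unfolding c2 by (rule integral_bind_pmf[OF f(2)])
    also have "\<dots> = G \<eta>" unfolding G_def
    proof (rule pmf_integral_cong)
      fix \<xi> assume "\<xi> \<in> set_pmf (chain p l k \<eta>)"
      then have v\<xi>: "valid \<xi>" using chain_supp[OF v\<eta>] by blast
      have "(\<integral>\<zeta>. f \<zeta> \<partial>measure_pmf (chain p (m + 1) c \<xi>)) = (\<integral>\<zeta>. f \<xi> \<partial>measure_pmf (chain p (m + 1) c \<xi>))"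
      proof (rule pmf_integral_cong)
        fix \<zeta> assume "\<zeta> \<in> set_pmf (chain p (m + 1) c \<xi>)"
        then have z: "valid \<zeta>" "\<And>i. i < m + 1 \<Longrightarrow> \<zeta> i = \<xi> i" using chain_supp[OF v\<xi>] by auto
        show "f \<zeta> = f \<xi>" by (rule Fle_fun_cyl[OF f(1) _ z(1) v\<xi>]) (use z(2) in auto)
      qed
      then show "(\<integral>\<zeta>. f \<zeta> \<partial>measure_pmf (chain p (m + 1) c \<xi>)) = f \<xi>" by (simp add: pmf_integral_const)
    qed
    finally show "G \<eta> = (\<integral>\<theta>. f \<theta> \<partial>measure_pmf (chain p l (k + c) \<eta>))" by simp
  qed
  also have "\<dots> = (\<integral>\<theta>. f \<theta> \<partial>measure_pmf (chain p l' (a + (k + c)) \<omega>))"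
    unfolding c1 by (rule integral_bind_pmf[OF f(2), symmetric])
  also have "\<dots> = integral\<^sup>L (rho p l' m' \<omega>) f"
    using integral_rho[OF fm' v, of l'] nn1 by simp
  finally show ?thesis unfolding F_def .
qed

lemma shift_image_sets:
  assumes A: "A \<in> sets (Fle i)"
  shows "shift i ` A \<in> sets (Fle 0)"
proof -
  have As: "A \<subseteq> Omega'" using sets.sets_into_space[OF A] by simp
  have eq: "shift i ` A = shift (- i) -` A \<inter> space (Fle 0)"
  proof
    show "shift i ` A \<subseteq> shift (- i) -` A \<inter> space (Fle 0)"
    proof
      fix x assume "x \<in> shift i ` A"
      then obtain a where a: "a \<in> A" "x = shift i a" by auto
      have "shift (- i) x = a" using a(2) by (simp add: shift_shift)
      moreover have "valid x" using a As valid_shift by auto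
      ultimately show "x \<in> shift (- i) -` A \<inter> space (Fle 0)" using a(1) by simp
    qed
    show "shift (- i) -` A \<inter> space (Fle 0) \<subseteq> shift i ` A"
    proof
      fix x assume "x \<in> shift (- i) -` A \<inter> space (Fle 0)"
      then have "shift (- i) x \<in> A" by simp
      moreover have "x = shift i (shift (- i) x)" by (simp add: shift_shift)
      ultimately show "x \<in> shift i ` A" by blast
    qed
  qed
  have "shift (- i) \<in> measurable (Fle 0) (Fle i)" using shift_meas[of "- i" 0] by simp
  then show ?thesis unfolding eq using A by (rule measurable_sets)
qed

lemma rho_single_measure:
  assumes "A \<in> sets (Fle m)" "valid \<omega>"
  shows "measure (rho p m m \<omega>) A = indicator A (upd m \<omega> True) * (1 - gg p m \<omega>) + indicator A (upd m \<omega> False) * gg p m \<omega>"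
proof -
  have As: "A \<subseteq> Omega'" using sets.sets_into_space[OF assms(1)] by simp
  have "measure (rho p m m \<omega>) A = integral\<^sup>L (rho p m m \<omega>) (indicator A)"
    using As by (simp add: Int_absorb2)
  also have "\<dots> = indicator A (upd m \<omega> True) * (1 - gg p m \<omega>) + indicator A (upd m \<omega> False) * gg p m \<omega>"
    by (rule integral_rho_single[OF borel_measurable_indicator[OF assms(1)] assms(2)])
  finally show ?thesis .
qed

lemma rho_transl:
  assumes v: "valid \<omega>" and A: "A \<in> sets (Fle i)"
  shows "measure (rho p i i \<omega>) A = measure (rho p 0 0 (shift i \<omega>)) (shift i ` A)"
proof -
  have v': "valid (shift i \<omega>)" using v valid_shift by simp
  have g: "gg p 0 (shift i \<omega>) = gg p i \<omega>" unfolding gg_def by (simp add: shift_shift)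
  have u: "upd 0 (shift i \<omega>) b = shift i (upd i \<omega> b)" for b by (simp add: shift_upd)
  have ind: "indicator (shift i ` A) (shift i x) = (indicator A x :: real)" for x
    using shift_inj[of i x] by (auto simp: indicator_def)
  show ?thesis
    unfolding rho_single_measure[OF A v] rho_single_measure[OF shift_image_sets[OF A] v'] g u ind ..
qed

lemma rho_gp:
  assumes v: "valid \<omega>"
  shows "measure (rho p 0 0 \<omega>) {\<eta> \<in> Omega'. \<not> \<eta> 0} = gp p (nfun \<omega>)"
    and "measure (rho p 0 0 \<omega>) {\<eta> \<in> Omega'. \<eta> 0} = 1 - gp p (nfun \<omega>)"
proof -
  have S0: "{\<eta> \<in> Omega'. \<not> \<eta> 0} \<in> sets (Fle 0)" by (rule Fle_dep_sets[of "{0}"]) auto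
  have S1: "{\<eta> \<in> Omega'. \<eta> 0} \<in> sets (Fle 0)" by (rule Fle_dep_sets[of "{0}"]) auto
  have vT: "valid (upd 0 \<omega> True)" "valid (upd 0 \<omega> False)" using valid_upd v by auto
  have T0: "upd 0 \<omega> True 0" by (simp add: upd_at ub_def)
  have F0: "upd 0 \<omega> False 0 = (\<omega> (-1) \<and> \<not> \<omega> (-2))" by (simp add: upd_at ub_def)
  have gg0: "gg p 0 \<omega> = gp p (nfun \<omega>)" by (simp add: gg_def)
  show "measure (rho p 0 0 \<omega>) {\<eta> \<in> Omega'. \<not> \<eta> 0} = gp p (nfun \<omega>)"
  proof (cases "\<omega> (-1) \<and> \<not> \<omega> (-2)")
    case True
    then have "nfun \<omega> = 0" by (simp add: nfun_0_iff)
    then have "gp p (nfun \<omega>) = 0" by (simp add: gp_def zero_enat_def)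
    then show ?thesis unfolding rho_single_measure[OF S0 v] using T0 F0 True vT gg0 by simp
  next
    case False
    then show ?thesis unfolding rho_single_measure[OF S0 v] using T0 F0 vT gg0 by simp
  qed
  show "measure (rho p 0 0 \<omega>) {\<eta> \<in> Omega'. \<eta> 0} = 1 - gp p (nfun \<omega>)"
  proof (cases "\<omega> (-1) \<and> \<not> \<omega> (-2)")
    case True
    then have "nfun \<omega> = 0" by (simp add: nfun_0_iff)
    then have "gp p (nfun \<omega>) = 0" by (simp add: gp_def zero_enat_def)
    then show ?thesis unfolding rho_single_measure[OF S1 v] using T0 F0 True vT gg0 by simp
  next
    case False
    then show ?thesis unfolding rho_single_measure[OF S1 v] using T0 F0 vT gg0 by simp
  qed
qed

end

section \<open>The Bernoulli product measure\<close>

abbreviation "Mb p \<equiv> measure_pmf (bernoulli_pmf p)"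

lemma sets_mu: "sets (mu p) = sets Mfull"
  unfolding mu_def Mfull_def by (intro sets_PiM_cong) simp_all

lemma space_mu[simp]: "space (mu p) = UNIV"
  unfolding mu_def by (simp add: space_PiM)

lemma meas_mu: "measurable (mu p) N = measurable Mfull N"
  by (rule measurable_cong_sets[OF sets_mu refl])

lemma pps: "product_prob_space (\<lambda>_::int. Mb p)"
  by (intro product_prob_spaceI measure_pmf.prob_space_axioms)

lemma prob_mu: "prob_space (mu p)"
  unfolding mu_def by (intro prob_space_PiM measure_pmf.prob_space_axioms)

lemma int_mu:
  fixes f :: "(int \<Rightarrow> bool) \<Rightarrow> real"
  assumes "f \<in> borel_measurable Mfull" "\<And>x. \<bar>f x\<bar> \<le> B"
  shows "integrable (mu p) f"
proof -
  interpret prob_space "mu p" by (rule prob_mu)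
  show ?thesis
    by (rule integrable_const_bound[where B=B]) (use assms meas_mu in auto)
qed

lemma indep_coords: "prob_space.indep_vars (mu p) (\<lambda>_. Mb p) (\<lambda>i \<omega>. \<omega> i) UNIV"
proof -
  interpret P: product_prob_space "\<lambda>_::int. Mb p" UNIV by (rule pps)
  interpret prob_space "mu p" by (rule prob_mu)
  show ?thesis
  proof (subst indep_vars_iff_distr_eq_PiM)
    show "\<And>i. random_variable (Mb p) (\<lambda>\<omega>. \<omega> i)"
      unfolding mu_def by (rule measurable_component_singleton) simp
    have "(\<lambda>x. \<lambda>i\<in>UNIV. x i) = (\<lambda>x::int \<Rightarrow> bool. x)" by (simp add: fun_eq_iff)
    moreover have "\<And>i. distr (mu p) (Mb p) (\<lambda>\<omega>. \<omega> i) = Mb p"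
      unfolding mu_def by (rule P.PiM_component) simp
    ultimately show "distr (mu p) (Pi\<^sub>M UNIV (\<lambda>_. Mb p)) (\<lambda>x. \<lambda>i\<in>UNIV. x i) = Pi\<^sub>M UNIV (\<lambda>i. distr (mu p) (Mb p) (\<lambda>\<omega>. \<omega> i))"
      unfolding mu_def by (simp add: distr_id)
  qed simp
qed

definition extA :: "int set \<Rightarrow> (int \<Rightarrow> bool) \<Rightarrow> (int \<Rightarrow> bool)" where
  "extA A x = (\<lambda>j. if j \<in> A then x j else False)"

lemma extA_meas: "extA A \<in> measurable (Pi\<^sub>M A (\<lambda>_. Mb p)) Mfull"
proof (rule measurable_MfullI)
  fix j
  show "{x \<in> space (Pi\<^sub>M A (\<lambda>_. Mb p)). extA A x j} \<in> sets (Pi\<^sub>M A (\<lambda>_. Mb p))"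
  proof (cases "j \<in> A")
    case True
    have "(\<lambda>x. x j) \<in> measurable (Pi\<^sub>M A (\<lambda>_. Mb p)) (Mb p)"
      by (rule measurable_component_singleton[OF True])
    then have "(\<lambda>x. x j) -` {True} \<inter> space (Pi\<^sub>M A (\<lambda>_. Mb p)) \<in> sets (Pi\<^sub>M A (\<lambda>_. Mb p))"
      by (rule measurable_sets) simp
    moreover have "{x \<in> space (Pi\<^sub>M A (\<lambda>_. Mb p)). extA A x j} = (\<lambda>x. x j) -` {True} \<inter> space (Pi\<^sub>M A (\<lambda>_. Mb p))"
      using True by (auto simp: extA_def)
    ultimately show ?thesis by simp
  next
    case False
    then show ?thesis by (simp add: extA_def)
  qed
qed

lemma mu_indep:
  fixes F G :: "(int \<Rightarrow> bool) \<Rightarrow> real"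
  assumes AB: "A \<inter> B = {}"
    and dF: "\<And>x y. (\<And>j. j \<in> A \<Longrightarrow> x j = y j) \<Longrightarrow> F x = F y"
    and dG: "\<And>x y. (\<And>j. j \<in> B \<Longrightarrow> x j = y j) \<Longrightarrow> G x = G y"
    and mF: "F \<in> borel_measurable Mfull" and mG: "G \<in> borel_measurable Mfull"
    and bF: "\<And>x. \<bar>F x\<bar> \<le> c" and bG: "\<And>x. \<bar>G x\<bar> \<le> d"
  shows "(\<integral>x. F x * G x \<partial>mu p) = (\<integral>x. F x \<partial>mu p) * (\<integral>x. G x \<partial>mu p)"
proof -
  interpret prob_space "mu p" by (rule prob_mu)
  have iv: "indep_var (Pi\<^sub>M A (\<lambda>_. Mb p)) (\<lambda>\<omega>. restrict (\<lambda>i. \<omega> i) A) (Pi\<^sub>M B (\<lambda>_. Mb p)) (\<lambda>\<omega>. restrict (\<lambda>i. \<omega> i) B)"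
    by (rule indep_var_restrict[OF indep_coords AB]) auto
  have mF0: "(\<lambda>x. F (extA A x)) \<in> borel_measurable (Pi\<^sub>M A (\<lambda>_. Mb p))"
    using measurable_comp[OF extA_meas mF] by (simp add: comp_def)
  have mG0: "(\<lambda>x. G (extA B x)) \<in> borel_measurable (Pi\<^sub>M B (\<lambda>_. Mb p))"
    using measurable_comp[OF extA_meas mG] by (simp add: comp_def)
  have iv2: "indep_var borel ((\<lambda>x. F (extA A x)) \<circ> (\<lambda>\<omega>. restrict (\<lambda>i. \<omega> i) A))
      borel ((\<lambda>x. G (extA B x)) \<circ> (\<lambda>\<omega>. restrict (\<lambda>i. \<omega> i) B))"
    by (rule indep_var_compose[OF iv mF0 mG0])
  have eF: "((\<lambda>x. F (extA A x)) \<circ> (\<lambda>\<omega>. restrict (\<lambda>i. \<omega> i) A)) = F"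
    by (rule ext) (simp add: comp_def, rule dF, simp add: extA_def)
  have eG: "((\<lambda>x. G (extA B x)) \<circ> (\<lambda>\<omega>. restrict (\<lambda>i. \<omega> i) B)) = G"
    by (rule ext) (simp add: comp_def, rule dG, simp add: extA_def)
  have ivFG: "indep_var borel F borel G" using iv2 unfolding eF eG .
  show ?thesis
    by (rule indep_var_lebesgue_integral[OF ivFG int_mu[OF mF bF] int_mu[OF mG bG]])
qed

definition ind :: "bool \<Rightarrow> real" where "ind b = (if b then 1 else 0)"

lemma ind_simps[simp]: "ind True = 1" "ind False = 0" by (simp_all add: ind_def)
lemma ind_abs[simp]: "\<bar>ind b\<bar> \<le> 1" by (simp add: ind_def)
lemma ind_nonneg[simp]: "0 \<le> ind b" by (simp add: ind_def)
lemma ind_le1[simp]: "ind b \<le> 1" by (simp add: ind_def)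
lemma ind_not: "ind (\<not> b) = 1 - ind b" by (simp add: ind_def)
lemma ind_conj: "ind (a \<and> b) = ind a * ind b" by (simp add: ind_def)

lemma ind_meas: "{x. P x} \<in> sets Mfull \<Longrightarrow> (\<lambda>x. ind (P x)) \<in> borel_measurable Mfull"
proof -
  assume "{x. P x} \<in> sets Mfull"
  then have "(indicator {x. P x} :: _ \<Rightarrow> real) \<in> borel_measurable Mfull" by (rule borel_measurable_indicator)
  moreover have "(indicator {x. P x} :: _ \<Rightarrow> real) = (\<lambda>x. ind (P x))" by (auto simp: fun_eq_iff ind_def indicator_def)
  ultimately show ?thesis by metis
qed

lemma ind_dep_meas:
  assumes "finite S" "\<And>x y. (\<And>i. i \<in> S \<Longrightarrow> x i = y i) \<Longrightarrow> P x = P y"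
  shows "(\<lambda>x. ind (P x)) \<in> borel_measurable Mfull"
  by (rule ind_meas[OF Mfull_dep_sets[OF assms]])

definition NP :: "(int \<Rightarrow> bool) \<Rightarrow> int \<Rightarrow> nat \<Rightarrow> bool" where
  "NP \<omega> a k \<longleftrightarrow> (\<forall>j. a \<le> j \<longrightarrow> j + 1 < a + int k \<longrightarrow> \<not> (\<omega> j \<and> \<omega> (j + 1)))"

lemma NP_dep: "(\<And>i. i \<in> {a ..< a + int k} \<Longrightarrow> x i = y i) \<Longrightarrow> NP x a k = NP y a k"
  unfolding NP_def by (metis (no_types, lifting) atLeastLessThan_iff less_add_one order.strict_trans
      le_add_same_cancel1 zero_le_one add_increasing2 )

lemma NP_meas: "(\<lambda>\<omega>. ind (NP \<omega> a k)) \<in> borel_measurable Mfull"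
proof (rule ind_dep_meas[of "{a ..< a + int k}"])
  fix x y :: "int \<Rightarrow> bool" assume "\<And>i. i \<in> {a..<a + int k} \<Longrightarrow> x i = y i"
  then show "NP x a k = NP y a k" by (rule NP_dep)
qed simp

lemma NP_small: "k \<le> 1 \<Longrightarrow> NP \<omega> a k"
  unfolding NP_def by auto

lemma NP_Suc: "NP \<omega> a (Suc k) \<longleftrightarrow> NP \<omega> a k \<and> (k \<ge> 1 \<longrightarrow> \<not> (\<omega> (a + int k - 1) \<and> \<omega> (a + int k)))"
proof
  assume h: "NP \<omega> a (Suc k)"
  have "NP \<omega> a k" using h unfolding NP_def by auto
  moreover have "k \<ge> 1 \<longrightarrow> \<not> (\<omega> (a + int k - 1) \<and> \<omega> (a + int k))"
  proof
    assume "k \<ge> 1"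
    then show "\<not> (\<omega> (a + int k - 1) \<and> \<omega> (a + int k))"
      using h unfolding NP_def by (auto dest: spec[of _ "a + int k - 1"])
  qed
  ultimately show "NP \<omega> a k \<and> (k \<ge> 1 \<longrightarrow> \<not> (\<omega> (a + int k - 1) \<and> \<omega> (a + int k)))" by blast
next
  assume h: "NP \<omega> a k \<and> (k \<ge> 1 \<longrightarrow> \<not> (\<omega> (a + int k - 1) \<and> \<omega> (a + int k)))"
  show "NP \<omega> a (Suc k)" unfolding NP_def
  proof (intro allI impI)
    fix j assume j: "a \<le> j" "j + 1 < a + int (Suc k)"
    show "\<not> (\<omega> j \<and> \<omega> (j + 1))"
    proof (cases "j + 1 < a + int k")
      case True then show ?thesis using h j unfolding NP_def by blast
    next
      case False
      then have "j = a + int k - 1" "k \<ge> 1" using j by auto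
      then show ?thesis using h by simp
    qed
  qed
qed

lemma NP_rec: "ind (NP \<omega> a (Suc (Suc k))) =
    ind (NP \<omega> a (Suc k)) * ind (\<not> \<omega> (a + int k + 1))
    + ind (NP \<omega> a k) * (ind (\<not> \<omega> (a + int k)) * ind (\<omega> (a + int k + 1)))"
proof -
  have e2: "NP \<omega> a (Suc (Suc k)) \<longleftrightarrow> NP \<omega> a (Suc k) \<and> \<not> (\<omega> (a + int k) \<and> \<omega> (a + int k + 1))"
    using NP_Suc[of \<omega> a "Suc k"] by (simp add: algebra_simps)
  have e1: "\<not> \<omega> (a + int k) \<Longrightarrow> NP \<omega> a (Suc k) \<longleftrightarrow> NP \<omega> a k"
    using NP_Suc[of \<omega> a k] by auto
  show ?thesis
    by (cases "\<omega> (a + int k + 1)"; cases "\<omega> (a + int k)") (simp_all add: e2 e1)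
qed

context pp
begin

lemma E_coord: "(\<integral>\<omega>. ind (\<omega> j) \<partial>mu p) = p" "(\<integral>\<omega>. ind (\<not> \<omega> j) \<partial>mu p) = 1 - p"
proof -
  interpret P: product_prob_space "\<lambda>_::int. Mb p" UNIV by (rule pps)
  have d: "distr (mu p) (Mb p) (\<lambda>\<omega>. \<omega> j) = Mb p"
    unfolding mu_def by (rule P.PiM_component) simp
  have m: "(\<lambda>\<omega>. \<omega> j) \<in> measurable (mu p) (Mb p)"
    unfolding mu_def by (rule measurable_component_singleton) simp
  have "(\<integral>\<omega>. ind (\<omega> j) \<partial>mu p) = (\<integral>b. ind b \<partial>Mb p)"
    using integral_distr[OF m, of ind] d by simp
  also have "\<dots> = p" using p0 p1 by simp
  finally show "(\<integral>\<omega>. ind (\<omega> j) \<partial>mu p) = p" .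
  have "(\<integral>\<omega>. ind (\<not> \<omega> j) \<partial>mu p) = (\<integral>b. ind (\<not> b) \<partial>Mb p)"
    using integral_distr[OF m, of "\<lambda>b. ind (\<not> b)"] d by simp
  also have "\<dots> = 1 - p" using p0 p1 by simp
  finally show "(\<integral>\<omega>. ind (\<not> \<omega> j) \<partial>mu p) = 1 - p" .
qed

lemma coord_meas: "(\<lambda>\<omega>. ind (\<omega> j)) \<in> borel_measurable Mfull" "(\<lambda>\<omega>. ind (\<not> \<omega> j)) \<in> borel_measurable Mfull"
  by (rule ind_dep_meas[of "{j}"], simp, simp)+

lemma E_const: "(\<integral>\<omega>. c \<partial>mu p) = (c::real)"
  using prob_space.prob_space[OF prob_mu] by simp

lemma NP_prob2: "(\<integral>\<omega>. ind (NP \<omega> a k) \<partial>mu p) = Zs p k \<and> (\<integral>\<omega>. ind (NP \<omega> a (Suc k)) \<partial>mu p) = Zs p (Suc k)"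
proof (induction k)
  case 0 then show ?case using NP_small[of 0] NP_small[of 1] prob_space.prob_space[OF prob_mu, of p] by simp
next
  case (Suc k)
  have IH: "(\<integral>\<omega>. ind (NP \<omega> a k) \<partial>mu p) = Zs p k" "(\<integral>\<omega>. ind (NP \<omega> a (Suc k)) \<partial>mu p) = Zs p (Suc k)"
    using Suc by auto
  have i1: "(\<integral>\<omega>. ind (NP \<omega> a (Suc k)) * ind (\<not> \<omega> (a + int k + 1)) \<partial>mu p) = Zs p (Suc k) * (1 - p)"
  proof -
    have "(\<integral>\<omega>. ind (NP \<omega> a (Suc k)) * ind (\<not> \<omega> (a + int k + 1)) \<partial>mu p)
       = (\<integral>\<omega>. ind (NP \<omega> a (Suc k)) \<partial>mu p) * (\<integral>\<omega>. ind (\<not> \<omega> (a + int k + 1)) \<partial>mu p)"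
    proof (rule mu_indep[where A="{a ..< a + int (Suc k)}" and B="{a + int k + 1}" and c=1 and d=1])
      fix x y :: "int \<Rightarrow> bool" assume "\<And>j. j \<in> {a..<a + int (Suc k)} \<Longrightarrow> x j = y j"
      then have "NP x a (Suc k) = NP y a (Suc k)" by (rule NP_dep)
      then show "ind (NP x a (Suc k)) = ind (NP y a (Suc k))" by simp
    next
    qed (auto intro: NP_meas coord_meas)
    then show ?thesis using IH E_coord by simp
  qed
  have i2: "(\<integral>\<omega>. ind (NP \<omega> a k) * (ind (\<not> \<omega> (a + int k)) * ind (\<omega> (a + int k + 1))) \<partial>mu p) = Zs p k * ((1 - p) * p)"
  proof -
    have i3: "(\<integral>\<omega>. ind (\<not> \<omega> (a + int k)) * ind (\<omega> (a + int k + 1)) \<partial>mu p) = (1 - p) * p"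
    proof -
      have "(\<integral>\<omega>. ind (\<not> \<omega> (a + int k)) * ind (\<omega> (a + int k + 1)) \<partial>mu p)
        = (\<integral>\<omega>. ind (\<not> \<omega> (a + int k)) \<partial>mu p) * (\<integral>\<omega>. ind (\<omega> (a + int k + 1)) \<partial>mu p)"
        by (rule mu_indep[where A="{a + int k}" and B="{a + int k + 1}" and c=1 and d=1]) (auto intro: coord_meas)
      then show ?thesis using E_coord by simp
    qed
    have "(\<integral>\<omega>. ind (NP \<omega> a k) * (ind (\<not> \<omega> (a + int k)) * ind (\<omega> (a + int k + 1))) \<partial>mu p)
       = (\<integral>\<omega>. ind (NP \<omega> a k) \<partial>mu p) * (\<integral>\<omega>. ind (\<not> \<omega> (a + int k)) * ind (\<omega> (a + int k + 1)) \<partial>mu p)"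
    proof (rule mu_indep[where A="{a ..< a + int k}" and B="{a + int k, a + int k + 1}" and c=1 and d=1])
      fix x y :: "int \<Rightarrow> bool" assume "\<And>j. j \<in> {a..<a + int k} \<Longrightarrow> x j = y j"
      then have "NP x a k = NP y a k" by (rule NP_dep)
      then show "ind (NP x a k) = ind (NP y a k)" by simp
    next
      show "(\<lambda>x. ind (\<not> x (a + int k)) * ind (x (a + int k + 1))) \<in> borel_measurable Mfull"
        using coord_meas by (intro borel_measurable_times) auto
      show "\<And>x. \<bar>ind (\<not> x (a + int k)) * ind (x (a + int k + 1))\<bar> \<le> 1"
        by (simp add: ind_def)
    qed (auto intro: NP_meas)
    then show ?thesis using IH i3 by simp
  qed
  have "(\<integral>\<omega>. ind (NP \<omega> a (Suc (Suc k))) \<partial>mu p)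
     = (\<integral>\<omega>. ind (NP \<omega> a (Suc k)) * ind (\<not> \<omega> (a + int k + 1)) \<partial>mu p)
     + (\<integral>\<omega>. ind (NP \<omega> a k) * (ind (\<not> \<omega> (a + int k)) * ind (\<omega> (a + int k + 1))) \<partial>mu p)"
    unfolding NP_rec
  proof (rule Bochner_Integration.integral_add)
    show "integrable (mu p) (\<lambda>\<omega>. ind (NP \<omega> a (Suc k)) * ind (\<not> \<omega> (a + int k + 1)))"
      by (rule int_mu[where B=1], intro borel_measurable_times NP_meas coord_meas) (simp add: ind_def)
    show "integrable (mu p) (\<lambda>\<omega>. ind (NP \<omega> a k) * (ind (\<not> \<omega> (a + int k)) * ind (\<omega> (a + int k + 1))))"
      by (rule int_mu[where B=1], intro borel_measurable_times NP_meas coord_meas) (simp add: ind_def)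
  qed
  also have "\<dots> = Zs p (Suc (Suc k))" using i1 i2 by (simp add: algebra_simps)
  finally show ?case using IH by simp
qed

lemma NP_prob: "(\<integral>\<omega>. ind (NP \<omega> a k) \<partial>mu p) = Zs p k"
  using NP_prob2 by blast

end

lemma nfun_valid_char:
  assumes v: "valid w" and n: "n \<ge> 1"
  shows "nfun (shift i w) = enat n \<longleftrightarrow> w (i - int n - 1) \<and> w (i - int n) \<and> (\<forall>x. i - int n < x \<and> x < i \<longrightarrow> \<not> w x)"
proof -
  have sh: "shift i w (- int k - 1) = w (i - int k - 1)" "shift i w (- int k) = w (i - int k)" for k
    by (simp_all add: algebra_simps)
  have ch: "nfun (shift i w) = enat n \<longleftrightarrow> \<not> (\<not> w (i - 2) \<and> w (i - 1)) \<and> w (i - int n - 1) \<and> w (i - int n)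
     \<and> (\<forall>k::nat. 1 \<le> k \<and> k < n \<longrightarrow> \<not> (w (i - int k - 1) \<and> w (i - int k)))"
    unfolding nfun_enat_iff[OF n] sh by (simp add: algebra_simps)
  show ?thesis
  proof
    assume h: "nfun (shift i w) = enat n"
    then have nz: "\<not> (\<not> w (i - 2) \<and> w (i - 1))" and pn: "w (i - int n - 1)" "w (i - int n)"
      and np: "\<And>k::nat. 1 \<le> k \<Longrightarrow> k < n \<Longrightarrow> \<not> (w (i - int k - 1) \<and> w (i - int k))"
      using ch by auto
    have "\<not> w x" if x: "i - int n < x" "x < i" for x
    proof
      assume wx: "w x"
      then have "w (x - 1) \<or> w (x + 1)" using v unfolding valid_def by blast
      then show False
      proof
        assume a: "w (x - 1)"
        define k where "k = nat (i - x)"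
        have k: "int k = i - x" "1 \<le> k" "k < n" using x by (auto simp: k_def)
        have e: "i - int k = x" using k(1) by simp
        have "w (i - int k - 1) \<and> w (i - int k)" unfolding e using a wx by simp
        then show False using np[OF k(2,3)] by blast
      next
        assume a: "w (x + 1)"
        show False
        proof (cases "x + 1 < i")
          case True
          define k where "k = nat (i - x - 1)"
          have k: "int k = i - x - 1" "1 \<le> k" "k < n" using x True by (auto simp: k_def)
          have e: "i - int k = x + 1" using k(1) by simp
          have "w (i - int k - 1) \<and> w (i - int k)" unfolding e using a wx by simp
          then show False using np[OF k(2,3)] by blast
        next
          case False
          then have xi: "x = i - 1" using x by simp
          then have "w (i - 2)" using nz wx by simp
          moreover have "(1::nat) < n" using x xi by simp
          ultimately show False using np[of 1] wx xi by simp
        qed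
      qed
    qed
    then show "w (i - int n - 1) \<and> w (i - int n) \<and> (\<forall>x. i - int n < x \<and> x < i \<longrightarrow> \<not> w x)"
      using pn by blast
  next
    assume h: "w (i - int n - 1) \<and> w (i - int n) \<and> (\<forall>x. i - int n < x \<and> x < i \<longrightarrow> \<not> w x)"
    have nz: "\<not> (\<not> w (i - 2) \<and> w (i - 1))"
    proof (cases "n = 1")
      case True then show ?thesis using h by simp
    next
      case False then have "i - int n < i - 1" using n by simp
      then show ?thesis using h by auto
    qed
    have np: "\<not> (w (i - int k - 1) \<and> w (i - int k))" if "1 \<le> k" "k < n" for k :: nat
      using h that by auto
    show "nfun (shift i w) = enat n" using ch nz np h by blast
  qed
qed

definition En :: "int \<Rightarrow> nat \<Rightarrow> (int \<Rightarrow> bool) \<Rightarrow> bool" where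
  "En i n w \<longleftrightarrow> w (i - int n - 1) \<and> w (i - int n) \<and> \<not> w (i - int n + 1) \<and> NP w (i - int n + 2) (n - 1)"

lemma Tmap_apply: "Tmap w x = (w x \<and> (w (x - 1) \<or> w (x + 1)))"
  unfolding Tmap_def by simp

lemma Tmap_En:
  assumes n: "n \<ge> 2"
  shows "(Tmap w (i - int n - 1) \<and> Tmap w (i - int n) \<and> (\<forall>x. i - int n < x \<and> x < i \<longrightarrow> \<not> Tmap w x))
    \<longleftrightarrow> En i n w"
proof
  assume h: "Tmap w (i - int n - 1) \<and> Tmap w (i - int n) \<and> (\<forall>x. i - int n < x \<and> x < i \<longrightarrow> \<not> Tmap w x)"
  have a: "w (i - int n - 1)" "w (i - int n)" using h by (auto simp: Tmap_apply)
  have b: "\<not> w (i - int n + 1)"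
  proof -
    have "\<not> Tmap w (i - int n + 1)" using h n by auto
    then show ?thesis using a by (auto simp: Tmap_apply)
  qed
  have c: "NP w (i - int n + 2) (n - 1)" unfolding NP_def
  proof (intro allI impI)
    fix j assume j: "i - int n + 2 \<le> j" "j + 1 < i - int n + 2 + int (n - 1)"
    then have "\<not> Tmap w j" using h n by auto
    then show "\<not> (w j \<and> w (j + 1))" by (auto simp: Tmap_apply)
  qed
  show "En i n w" unfolding En_def using a b c by blast
next
  assume e: "En i n w"
  then have a: "w (i - int n - 1)" "w (i - int n)" "\<not> w (i - int n + 1)"
    and c: "\<And>j. i - int n + 2 \<le> j \<Longrightarrow> j + 1 < i + 1 \<Longrightarrow> \<not> (w j \<and> w (j + 1))"
    unfolding En_def NP_def using n by (auto simp: algebra_simps)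
  have "\<not> Tmap w x" if x: "i - int n < x" "x < i" for x
  proof (cases "x = i - int n + 1")
    case True then show ?thesis using a by (simp add: Tmap_apply)
  next
    case False
    then have x2: "i - int n + 2 \<le> x" using x by simp
    have r: "\<not> (w x \<and> w (x + 1))" using c[OF x2] x by simp
    have l: "\<not> (w (x - 1) \<and> w x)"
    proof (cases "x - 1 = i - int n + 1")
      case True then show ?thesis unfolding True using a by simp
    next
      case False
      then have "i - int n + 2 \<le> x - 1" using x2 by simp
      then show ?thesis using c[of "x - 1"] x by simp
    qed
    show ?thesis using r l by (auto simp: Tmap_apply)
  qed
  then show "Tmap w (i - int n - 1) \<and> Tmap w (i - int n) \<and> (\<forall>x. i - int n < x \<and> x < i \<longrightarrow> \<not> Tmap w x)"
    using a by (auto simp: Tmap_apply)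
qed

lemma N_En:
  assumes n: "n \<ge> 2"
  shows "nfun (shift i (Tmap w)) = enat n \<longleftrightarrow> En i n w"
  using nfun_valid_char[OF valid_Tmap, of n i w] n Tmap_En[OF n] by simp

lemma N_E1: "nfun (shift i (Tmap w)) = enat 1 \<longleftrightarrow> w (i - 2) \<and> w (i - 1)"
  using nfun_valid_char[OF valid_Tmap, of 1 i w] by (auto simp: Tmap_apply)

lemma En_sigma:
  assumes n: "n \<ge> 2" and e: "En i n w"
  shows "\<not> Tmap w i \<longleftrightarrow> NP w (i - int n + 2) n"
proof -
  have a: "\<not> w (i - int n + 1)" and c: "NP w (i - int n + 2) (n - 1)" using e unfolding En_def by auto
  have s: "NP w (i - int n + 2) n \<longleftrightarrow> NP w (i - int n + 2) (n - 1) \<and> \<not> (w i \<and> w (i + 1))"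
  proof -
    have n1: "Suc 0 \<le> n - Suc 0" "Suc (n - 1) = n" using n by auto
    have "i - int n + 2 + int (n - 1) - 1 = i" "i - int n + 2 + int (n - 1) = i + 1" using n by (simp_all add: of_nat_diff)
    then show ?thesis using NP_Suc[of w "i - int n + 2" "n - 1"] n1 by simp
  qed
  have l: "\<not> (w (i - 1) \<and> w i)"
  proof (cases "n = 2")
    case True then show ?thesis using a by simp
  next
    case False
    then have "i - int n + 2 \<le> i - 1" using n by simp
    then show ?thesis using c n unfolding NP_def by (auto dest: spec[of _ "i - 1"] simp: of_nat_diff)
  qed
  show ?thesis using s c l by (auto simp: Tmap_apply)
qed

definition tr :: "int \<Rightarrow> (int \<Rightarrow> bool) \<Rightarrow> (int \<Rightarrow> bool)" where
  "tr a w = (\<lambda>j. if j \<le> a then w j else False)"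

lemma Tmap_tr:
  assumes "w (i - int n - 1)" "w (i - int n)" "\<forall>x. i - int n < x \<and> x < i \<longrightarrow> \<not> Tmap w x" "x \<le> i - 1"
  shows "Tmap w x = Tmap (tr (i - int n) w) x"
proof -
  consider "x \<le> i - int n - 1" | "x = i - int n" | "i - int n < x" by linarith
  then show ?thesis
  proof cases
    case 1 then show ?thesis by (simp add: Tmap_apply tr_def)
  next
    case 2 then show ?thesis using assms by (simp add: Tmap_apply tr_def)
  next
    case 3 then show ?thesis using assms by (simp add: Tmap_apply tr_def)
  qed
qed

lemma N_tail:
  assumes "\<not> nfun (shift i (Tmap w)) \<le> enat K"
  shows "NP w (i - int K - 1) (K + 1)"
  unfolding NP_def
proof (intro allI impI notI)
  fix j assume j: "i - int K - 1 \<le> j" "j + 1 < i - int K - 1 + int (K + 1)" and wj: "w j \<and> w (j + 1)"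
  define k where "k = nat (i - j - 1)"
  have k: "int k = i - j - 1" "k \<ge> 1" "k \<le> K" using j by (auto simp: k_def)
  have "Tmap w j" "Tmap w (j + 1)" using wj by (auto simp: Tmap_apply)
  moreover have e1: "- int k - 1 + i = j" and e2: "- int k + i = j + 1" using k(1) by simp_all
  moreover have "shift i (Tmap w) (- int k - 1) = Tmap w j" unfolding shift_apply e1 ..
  moreover have "shift i (Tmap w) (- int k) = Tmap w (j + 1)" unfolding shift_apply e2 ..
  ultimately have "shift i (Tmap w) (- int k - 1)" "shift i (Tmap w) (- int k)" by simp_all
  then have "nfun (shift i (Tmap w)) \<le> enat k" using nfun_le k(2) by blast
  then show False using assms k(3) by (meson enat_ord_simps(1) order_trans)
qed

lemma tr_meas: "tr a \<in> measurable Mfull Mfull"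
proof (rule measurable_MfullI)
  fix j
  show "{x \<in> space Mfull. tr a x j} \<in> sets Mfull"
  proof -
    have "{x. tr a x j} \<in> sets Mfull"
    proof (rule Mfull_dep_sets[of "{j}"])
      fix x y :: "int \<Rightarrow> bool" assume "\<And>k. k \<in> {j} \<Longrightarrow> x k = y k"
      then show "tr a x j = tr a y j" by (simp add: tr_def)
    qed simp
    then show ?thesis by simp
  qed
qed

lemma N_meas: "(\<lambda>\<omega>. nfun (shift i (Tmap \<omega>))) \<in> measurable Mfull (count_space UNIV)"
  using measurable_comp[OF Tmap_meas_Fle nfun_meas] by (simp add: comp_def)

lemma indN_meas: "(\<lambda>\<omega>. ind (Q (nfun (shift i (Tmap \<omega>))))) \<in> borel_measurable Mfull"
proof -
  have "(\<lambda>v. ind (Q v)) \<in> borel_measurable (count_space UNIV)" by simp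
  from measurable_comp[OF N_meas[of i] this] show ?thesis by (simp add: comp_def)
qed

lemma sT_meas: "(\<lambda>\<omega>. ind (\<not> Tmap \<omega> i)) \<in> borel_measurable Mfull"
proof (rule ind_dep_meas[of "{i - 1, i, i + 1}"])
  fix x y :: "int \<Rightarrow> bool" assume "\<And>j. j \<in> {i - 1, i, i + 1} \<Longrightarrow> x j = y j"
  then show "(\<not> Tmap x i) = (\<not> Tmap y i)" by (simp add: Tmap_apply)
qed simp

context pp
begin

lemma gT_meas: "(\<lambda>\<omega>. gg p i (Tmap \<omega>)) \<in> borel_measurable Mfull"
  using measurable_comp[OF Tmap_meas_Fle gfun_meas[of p i]] by (simp add: comp_def gg_def)

context
  fixes i :: int and h :: "(int \<Rightarrow> bool) \<Rightarrow> real" and Bh :: real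
  assumes hm: "h \<in> borel_measurable (Fle (i - 1))" and hb: "\<And>x. \<bar>h x\<bar> \<le> Bh"
begin

abbreviation "NN \<omega> \<equiv> nfun (shift i (Tmap \<omega>))"
abbreviation "DD \<omega> \<equiv> h (Tmap \<omega>) * (ind (\<not> Tmap \<omega> i) - gg p i (Tmap \<omega>))"

lemma hT_meas: "(\<lambda>\<omega>. h (Tmap \<omega>)) \<in> borel_measurable Mfull"
  using measurable_comp[OF Tmap_meas_Fle hm] by (simp add: comp_def)

lemma hTtr_meas: "(\<lambda>\<omega>. h (Tmap (tr a \<omega>))) \<in> borel_measurable Mfull"
  using measurable_comp[OF tr_meas hT_meas] by (simp add: comp_def)

lemma DD_meas: "DD \<in> borel_measurable Mfull"
  using hT_meas sT_meas gT_meas by measurable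

lemma Bh_nonneg: "0 \<le> Bh" using hb[of undefined] by simp

lemma DD_bound: "\<bar>DD \<omega>\<bar> \<le> Bh"
proof -
  have "\<bar>ind (\<not> Tmap \<omega> i) - gg p i (Tmap \<omega>)\<bar> \<le> 1"
    using gg_range[of i "Tmap \<omega>"] by (auto simp: ind_def)
  then have "\<bar>DD \<omega>\<bar> \<le> Bh * 1" unfolding abs_mult
    using hb[of "Tmap \<omega>"] by (intro mult_mono) auto
  then show ?thesis by simp
qed

lemma h_tr:
  assumes "\<omega> (i - int n - 1)" "\<omega> (i - int n)" "\<forall>x. i - int n < x \<and> x < i \<longrightarrow> \<not> Tmap \<omega> x"
  shows "h (Tmap \<omega>) = h (Tmap (tr (i - int n) \<omega>))"
  by (rule Fle_fun_cyl[OF hm _ valid_Tmap valid_Tmap]) (rule Tmap_tr[OF assms], simp)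

lemma term0: "DD \<omega> * ind (NN \<omega> = enat 0) = 0"
proof (cases "NN \<omega> = enat 0")
  case True
  then have a: "\<not> Tmap \<omega> (i - 2) \<and> Tmap \<omega> (i - 1)"
    using nfun_0_iff[of "shift i (Tmap \<omega>)"] by (simp add: zero_enat_def algebra_simps)
  have "Tmap \<omega> (i - 1 - 1) \<or> Tmap \<omega> (i - 1 + 1)" using a valid_Tmap[of \<omega>] unfolding valid_def by blast
  then have "Tmap \<omega> i" using a by simp
  moreover have "gg p i (Tmap \<omega>) = 0" unfolding gg_def using True by (simp add: gp_def)
  ultimately show ?thesis by simp
qed simp


lemma NP_ind_dep: "(\<And>j. a \<le> j \<Longrightarrow> j < a + int k \<Longrightarrow> x j = y j) \<Longrightarrow> ind (NP x a k) = ind (NP y a k)"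
  using NP_dep[of a k x y] by auto

lemma termn:
  assumes n: "n \<ge> 2"
  shows "(\<integral>\<omega>. DD \<omega> * ind (NN \<omega> = enat n) \<partial>mu p) = 0"
proof -
  define P where "P \<omega> = h (Tmap (tr (i - int n) \<omega>)) * ind (\<omega> (i - int n - 1) \<and> \<omega> (i - int n))" for \<omega>
  define G1 where "G1 \<omega> = ind (\<not> \<omega> (i - int n + 1)) * ind (NP \<omega> (i - int n + 2) n)" for \<omega>
  define G0 where "G0 \<omega> = ind (\<not> \<omega> (i - int n + 1)) * ind (NP \<omega> (i - int n + 2) (n - 1))" for \<omega>
  have NPs: "NP \<omega> a n \<Longrightarrow> NP \<omega> a (n - 1)" for \<omega> a
    using NP_Suc[of \<omega> a "n - 1"] n by (simp add: Suc_diff_Suc numeral_2_eq_2)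
  have pw: "DD \<omega> * ind (NN \<omega> = enat n) = P \<omega> * G1 \<omega> - gp p (enat n) * (P \<omega> * G0 \<omega>)" for \<omega>
  proof (cases "En i n \<omega>")
    case True
    have NN: "NN \<omega> = enat n" using N_En[OF n] True by simp
    have e: "\<omega> (i - int n - 1)" "\<omega> (i - int n)" "\<not> \<omega> (i - int n + 1)" "NP \<omega> (i - int n + 2) (n - 1)"
      using True unfolding En_def by auto
    have T: "\<forall>x. i - int n < x \<and> x < i \<longrightarrow> \<not> Tmap \<omega> x" using Tmap_En[OF n] True by blast
    have hh: "h (Tmap \<omega>) = h (Tmap (tr (i - int n) \<omega>))" by (rule h_tr[OF e(1,2) T])
    have g: "gg p i (Tmap \<omega>) = gp p (enat n)" unfolding gg_def NN ..
    have s: "ind (\<not> Tmap \<omega> i) = ind (NP \<omega> (i - int n + 2) n)" using En_sigma[OF n True] by simp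
    show ?thesis unfolding P_def G1_def G0_def NN hh g s using e by (simp add: algebra_simps)
  next
    case False
    have NN: "NN \<omega> \<noteq> enat n" using N_En[OF n] False by simp
    have "P \<omega> * G1 \<omega> = 0 \<and> P \<omega> * G0 \<omega> = 0"
    proof (cases "\<omega> (i - int n - 1) \<and> \<omega> (i - int n)")
      case True
      then have "\<not> (\<not> \<omega> (i - int n + 1) \<and> NP \<omega> (i - int n + 2) (n - 1))" using False unfolding En_def by blast
      then have "G1 \<omega> = 0" "G0 \<omega> = 0" unfolding G1_def G0_def using NPs[of \<omega> "i - int n + 2"] by (auto simp: ind_def)
      then show ?thesis by simp
    next
      case False then show ?thesis unfolding P_def by (auto simp: ind_def)
    qed
    then have a: "P \<omega> * G1 \<omega> = 0" and b: "P \<omega> * G0 \<omega> = 0" by auto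
    show ?thesis using NN by (simp del: mult_eq_0_iff add: a b)
  qed
  have mP: "P \<in> borel_measurable Mfull" unfolding P_def[abs_def]
    using hTtr_meas[of "i - int n"] by (intro borel_measurable_times ind_dep_meas[of "{i - int n - 1, i - int n}"]) auto
  have bP: "\<bar>P \<omega>\<bar> \<le> Bh" for \<omega> unfolding P_def using hb by (simp add: ind_def abs_mult Bh_nonneg)
  have mG1: "G1 \<in> borel_measurable Mfull" unfolding G1_def[abs_def]
    by (intro borel_measurable_times coord_meas NP_meas)
  have mG0: "G0 \<in> borel_measurable Mfull" unfolding G0_def[abs_def]
    by (intro borel_measurable_times coord_meas NP_meas)
  have bG1: "\<bar>G1 \<omega>\<bar> \<le> 1" for \<omega> unfolding G1_def by (simp add: ind_def)
  have bG0: "\<bar>G0 \<omega>\<bar> \<le> 1" for \<omega> unfolding G0_def by (simp add: ind_def)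
  have dP: "P x = P y" if "\<And>j. j \<in> {..i - int n} \<Longrightarrow> x j = y j" for x y
  proof -
    have "tr (i - int n) x = tr (i - int n) y" using that by (auto simp: tr_def fun_eq_iff)
    moreover have "x (i - int n - 1) = y (i - int n - 1)" "x (i - int n) = y (i - int n)" using that by auto
    ultimately show ?thesis unfolding P_def by simp
  qed
  have NPd: "NP x a k = NP y a k" if "\<And>j. j \<in> {a..<a + int k} \<Longrightarrow> x j = y j" for x y a k
    by (rule NP_dep) (use that in auto)
  have dG: "G x = G y" if "\<And>j. j \<in> {i - int n + 1..} \<Longrightarrow> x j = y j"
    and "G = G1 \<or> G = G0" for x y G
  proof -
    have "x (i - int n + 1) = y (i - int n + 1)" using that(1) by auto
    moreover have "NP x (i - int n + 2) k = NP y (i - int n + 2) k" for k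
      by (rule NPd) (use that(1) in auto)
    ultimately show ?thesis using that(2) unfolding G1_def G0_def by auto
  qed
  have AB: "{..i - int n} \<inter> {i - int n + 1..} = {}" by auto
  have EG1: "(\<integral>\<omega>. G1 \<omega> \<partial>mu p) = (1 - p) * Zs p n"
  proof -
    have "(\<integral>\<omega>. G1 \<omega> \<partial>mu p) = (\<integral>\<omega>. ind (\<not> \<omega> (i - int n + 1)) \<partial>mu p) * (\<integral>\<omega>. ind (NP \<omega> (i - int n + 2) n) \<partial>mu p)"
      unfolding G1_def
      by (rule mu_indep[where A="{i - int n + 1}" and B="{i - int n + 2..<i - int n + 2 + int n}" and c=1 and d=1])
         (auto intro: coord_meas NP_meas NP_ind_dep)
    then show ?thesis using E_coord NP_prob by simp
  qed
  have EG0: "(\<integral>\<omega>. G0 \<omega> \<partial>mu p) = (1 - p) * Zs p (n - 1)"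
  proof -
    have "(\<integral>\<omega>. G0 \<omega> \<partial>mu p) = (\<integral>\<omega>. ind (\<not> \<omega> (i - int n + 1)) \<partial>mu p) * (\<integral>\<omega>. ind (NP \<omega> (i - int n + 2) (n - 1)) \<partial>mu p)"
      unfolding G0_def
      by (rule mu_indep[where A="{i - int n + 1}" and B="{i - int n + 2..<i - int n + 2 + int (n - 1)}" and c=1 and d=1])
         (auto intro: coord_meas NP_meas NP_ind_dep)
    then show ?thesis using E_coord NP_prob by simp
  qed
  have EPG1: "(\<integral>\<omega>. P \<omega> * G1 \<omega> \<partial>mu p) = (\<integral>\<omega>. P \<omega> \<partial>mu p) * (\<integral>\<omega>. G1 \<omega> \<partial>mu p)"
  proof (rule mu_indep[OF AB _ _ mP mG1 bP bG1])
    fix x y :: "int \<Rightarrow> bool" assume "\<And>j. j \<in> {..i - int n} \<Longrightarrow> x j = y j"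
    then show "P x = P y" by (rule dP)
  next
    fix x y :: "int \<Rightarrow> bool" assume "\<And>j. j \<in> {i - int n + 1..} \<Longrightarrow> x j = y j"
    then show "G1 x = G1 y" using dG by blast
  qed
  have EPG0: "(\<integral>\<omega>. P \<omega> * G0 \<omega> \<partial>mu p) = (\<integral>\<omega>. P \<omega> \<partial>mu p) * (\<integral>\<omega>. G0 \<omega> \<partial>mu p)"
  proof (rule mu_indep[OF AB _ _ mP mG0 bP bG0])
    fix x y :: "int \<Rightarrow> bool" assume "\<And>j. j \<in> {..i - int n} \<Longrightarrow> x j = y j"
    then show "P x = P y" by (rule dP)
  next
    fix x y :: "int \<Rightarrow> bool" assume "\<And>j. j \<in> {i - int n + 1..} \<Longrightarrow> x j = y j"
    then show "G0 x = G0 y" using dG by blast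
  qed
  have iPG1: "integrable (mu p) (\<lambda>\<omega>. P \<omega> * G1 \<omega>)"
  proof (rule int_mu[where B="Bh"])
    show "(\<lambda>\<omega>. P \<omega> * G1 \<omega>) \<in> borel_measurable Mfull" using mP mG1 by (rule borel_measurable_times)
    fix x
    have "\<bar>P x\<bar> * \<bar>G1 x\<bar> \<le> Bh * 1" by (rule mult_mono) (use bP bG1 Bh_nonneg in auto)
    then show "\<bar>P x * G1 x\<bar> \<le> Bh" by (simp add: abs_mult)
  qed
  have iPG0: "integrable (mu p) (\<lambda>\<omega>. P \<omega> * G0 \<omega>)"
  proof (rule int_mu[where B="Bh"])
    show "(\<lambda>\<omega>. P \<omega> * G0 \<omega>) \<in> borel_measurable Mfull" using mP mG0 by (rule borel_measurable_times)
    fix x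
    have "\<bar>P x\<bar> * \<bar>G0 x\<bar> \<le> Bh * 1" by (rule mult_mono) (use bP bG0 Bh_nonneg in auto)
    then show "\<bar>P x * G0 x\<bar> \<le> Bh" by (simp add: abs_mult)
  qed
  obtain k where k: "n = Suc (Suc k)" using n by (metis add_2_eq_Suc le_Suc_ex)
  have gpn: "gp p (enat n) * Zs p (n - 1) = Zs p n"
    unfolding k gp_enat using Zs_pos[of "Suc k"] by simp
  have "(\<integral>\<omega>. DD \<omega> * ind (NN \<omega> = enat n) \<partial>mu p) = (\<integral>\<omega>. P \<omega> * G1 \<omega> - gp p (enat n) * (P \<omega> * G0 \<omega>) \<partial>mu p)"
    unfolding pw ..
  also have "\<dots> = (\<integral>\<omega>. P \<omega> * G1 \<omega> \<partial>mu p) - gp p (enat n) * (\<integral>\<omega>. P \<omega> * G0 \<omega> \<partial>mu p)"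
    using iPG1 iPG0 by simp
  also have "\<dots> = (\<integral>\<omega>. P \<omega> \<partial>mu p) * (1 - p) * (Zs p n - gp p (enat n) * Zs p (n - 1))"
    unfolding EPG1 EPG0 EG1 EG0 by (simp add: algebra_simps)
  also have "\<dots> = 0" unfolding gpn by simp
  finally show ?thesis .
qed


lemma iDDQ: "integrable (mu p) (\<lambda>\<omega>. DD \<omega> * ind (Q (NN \<omega>)))"
proof (rule int_mu[where B=Bh])
  show "(\<lambda>\<omega>. DD \<omega> * ind (Q (NN \<omega>))) \<in> borel_measurable Mfull"
    using DD_meas indN_meas[of Q i] by (rule borel_measurable_times)
  fix x
  have "\<bar>DD x\<bar> * \<bar>ind (Q (NN x))\<bar> \<le> Bh * 1" by (rule mult_mono) (use DD_bound Bh_nonneg in auto)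
  then show "\<bar>DD x * ind (Q (NN x))\<bar> \<le> Bh" by (simp add: abs_mult)
qed

lemma term1: "(\<integral>\<omega>. DD \<omega> * ind (NN \<omega> = enat 1) \<partial>mu p) = 0"
proof -
  define P where "P \<omega> = h (Tmap (tr (i - 1) \<omega>)) * ind (\<omega> (i - 2) \<and> \<omega> (i - 1))" for \<omega>
  have pw: "DD \<omega> * ind (NN \<omega> = enat 1) = P \<omega> * ind (\<not> \<omega> i) - (1 - p) * P \<omega>" for \<omega>
  proof (cases "\<omega> (i - 2) \<and> \<omega> (i - 1)")
    case True
    have NN: "NN \<omega> = enat 1" using N_E1 True by simp
    have vac: "\<forall>x. i - int 1 < x \<and> x < i \<longrightarrow> \<not> Tmap \<omega> x"
    proof (intro allI impI)
      fix x assume "i - int 1 < x \<and> x < i" then have False by linarith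
      then show "\<not> Tmap \<omega> x" ..
    qed
    have "\<omega> (i - int 1 - 1)" "\<omega> (i - int 1)" using True by simp_all
    from h_tr[OF this vac] have hh: "h (Tmap \<omega>) = h (Tmap (tr (i - 1) \<omega>))" by simp
    have g: "gg p i (Tmap \<omega>) = 1 - p" unfolding gg_def NN by (simp add: gp_def one_enat_def[symmetric])
    have s: "Tmap \<omega> i = \<omega> i" using True by (simp add: Tmap_apply)
    show ?thesis unfolding P_def NN hh g s using True by (simp add: algebra_simps)
  next
    case False
    then have "NN \<omega> \<noteq> enat 1" using N_E1 by simp
    moreover have "P \<omega> = 0" unfolding P_def using False by (auto simp: ind_def)
    ultimately show ?thesis by simp
  qed
  have mP: "P \<in> borel_measurable Mfull" unfolding P_def[abs_def]
    using hTtr_meas[of "i - 1"] by (intro borel_measurable_times ind_dep_meas[of "{i - 2, i - 1}"]) auto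
  have bP: "\<bar>P \<omega>\<bar> \<le> Bh" for \<omega> unfolding P_def using hb by (simp add: ind_def abs_mult Bh_nonneg)
  have iP: "integrable (mu p) P" by (rule int_mu[OF mP bP])
  have iPs: "integrable (mu p) (\<lambda>\<omega>. P \<omega> * ind (\<not> \<omega> i))"
  proof (rule int_mu[where B=Bh])
    show "(\<lambda>\<omega>. P \<omega> * ind (\<not> \<omega> i)) \<in> borel_measurable Mfull" using mP coord_meas(2) by (rule borel_measurable_times)
    fix x
    have "\<bar>P x\<bar> * \<bar>ind (\<not> x i)\<bar> \<le> Bh * 1" by (rule mult_mono) (use bP Bh_nonneg in auto)
    then show "\<bar>P x * ind (\<not> x i)\<bar> \<le> Bh" by (simp add: abs_mult)
  qed
  have E: "(\<integral>\<omega>. P \<omega> * ind (\<not> \<omega> i) \<partial>mu p) = (\<integral>\<omega>. P \<omega> \<partial>mu p) * (\<integral>\<omega>. ind (\<not> \<omega> i) \<partial>mu p)"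
  proof (rule mu_indep[where A="{..i - 1}" and B="{i}" and c=Bh and d=1])
    fix x y :: "int \<Rightarrow> bool" assume a: "\<And>j. j \<in> {..i - 1} \<Longrightarrow> x j = y j"
    have "tr (i - 1) x = tr (i - 1) y" using a by (auto simp: tr_def fun_eq_iff)
    moreover have "x (i - 2) = y (i - 2)" "x (i - 1) = y (i - 1)" using a by auto
    ultimately show "P x = P y" unfolding P_def by simp
  qed (use mP bP coord_meas in auto)
  have "(\<integral>\<omega>. DD \<omega> * ind (NN \<omega> = enat 1) \<partial>mu p) = (\<integral>\<omega>. P \<omega> * ind (\<not> \<omega> i) - (1 - p) * P \<omega> \<partial>mu p)"
    unfolding pw ..
  also have "\<dots> = (\<integral>\<omega>. P \<omega> * ind (\<not> \<omega> i) \<partial>mu p) - (1 - p) * (\<integral>\<omega>. P \<omega> \<partial>mu p)"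
    using iP iPs by simp
  also have "\<dots> = 0" unfolding E E_coord by simp
  finally show ?thesis .
qed

lemma term_all: "(\<integral>\<omega>. DD \<omega> * ind (NN \<omega> = enat n) \<partial>mu p) = 0"
proof -
  consider "n = 0" | "n = 1" | "n \<ge> 2" by linarith
  then show ?thesis
  proof cases
    case 1
    have z: "(\<lambda>\<omega>. DD \<omega> * ind (NN \<omega> = enat 0)) = (\<lambda>\<omega>. 0)" by (rule ext) (rule term0)
    show ?thesis unfolding 1 z by simp
  next
    case 2 then show ?thesis using term1 by simp
  next
    case 3 then show ?thesis by (rule termn)
  qed
qed

lemma partial: "(\<integral>\<omega>. DD \<omega> * ind (NN \<omega> \<le> enat K) \<partial>mu p) = 0"
proof (induction K)
  case 0
  have "(\<lambda>\<omega>. DD \<omega> * ind (NN \<omega> \<le> enat 0)) = (\<lambda>\<omega>. 0)"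
  proof (rule ext)
    fix \<omega>
    have e: "(NN \<omega> \<le> enat 0) = (NN \<omega> = enat 0)" by (simp add: zero_enat_def[symmetric])
    show "DD \<omega> * ind (NN \<omega> \<le> enat 0) = 0" unfolding e by (rule term0)
  qed
  note z = this
  show ?case unfolding z by simp
next
  case (Suc K)
  have pw: "DD \<omega> * ind (NN \<omega> \<le> enat (Suc K)) = DD \<omega> * ind (NN \<omega> \<le> enat K) + DD \<omega> * ind (NN \<omega> = enat (Suc K))" for \<omega>
  proof -
    have "ind (NN \<omega> \<le> enat (Suc K)) = ind (NN \<omega> \<le> enat K) + ind (NN \<omega> = enat (Suc K))"
      by (cases "NN \<omega>") (auto simp: ind_def)
    then show ?thesis by (simp add: algebra_simps)
  qed
  have "(\<integral>\<omega>. DD \<omega> * ind (NN \<omega> \<le> enat (Suc K)) \<partial>mu p)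
      = (\<integral>\<omega>. DD \<omega> * ind (NN \<omega> \<le> enat K) \<partial>mu p) + (\<integral>\<omega>. DD \<omega> * ind (NN \<omega> = enat (Suc K)) \<partial>mu p)"
    unfolding pw by (rule Bochner_Integration.integral_add[OF iDDQ iDDQ])
  also have "\<dots> = 0 + 0" by (rule arg_cong2[where f="(+)"]) (rule Suc.IH, rule term_all)
  finally show ?case by (simp only: add_0_left)
qed

lemma DD_zero: "(\<integral>\<omega>. DD \<omega> \<partial>mu p) = 0"
proof -
  have iDD: "integrable (mu p) DD" by (rule int_mu[OF DD_meas DD_bound])
  have bnd: "\<bar>\<integral>\<omega>. DD \<omega> \<partial>mu p\<bar> \<le> Bh * Zs p (Suc K)" for K
  proof -
    have "(\<integral>\<omega>. DD \<omega> \<partial>mu p) = (\<integral>\<omega>. DD \<omega> * ind (NN \<omega> \<le> enat K) + DD \<omega> * ind (\<not> NN \<omega> \<le> enat K) \<partial>mu p)"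
      by (intro Bochner_Integration.integral_cong) (auto simp: ind_def)
    also have "\<dots> = (\<integral>\<omega>. DD \<omega> * ind (\<not> NN \<omega> \<le> enat K) \<partial>mu p)"
      using Bochner_Integration.integral_add[OF iDDQ iDDQ, of "\<lambda>v. v \<le> enat K" "\<lambda>v. \<not> v \<le> enat K"] partial by simp
    finally have e: "(\<integral>\<omega>. DD \<omega> \<partial>mu p) = (\<integral>\<omega>. DD \<omega> * ind (\<not> NN \<omega> \<le> enat K) \<partial>mu p)" .
    define Z where "Z \<omega> = Bh * ind (NP \<omega> (i - int K - 1) (K + 1))" for \<omega>
    have iZ: "integrable (mu p) Z" unfolding Z_def[abs_def]
      by (rule int_mu[where B="Bh"]) (use NP_meas Bh_nonneg in \<open>auto simp: ind_def\<close>)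
    have EZ: "(\<integral>\<omega>. Z \<omega> \<partial>mu p) = Bh * Zs p (Suc K)" unfolding Z_def using NP_prob by simp
    have pwb: "\<bar>DD \<omega> * ind (\<not> NN \<omega> \<le> enat K)\<bar> \<le> Z \<omega>" for \<omega>
    proof (cases "NN \<omega> \<le> enat K")
      case True then show ?thesis unfolding Z_def using Bh_nonneg by simp
    next
      case False
      then have "NP \<omega> (i - int K - 1) (K + 1)" by (rule N_tail)
      then show ?thesis unfolding Z_def using False DD_bound[of \<omega>] by simp
    qed
    have ub: "DD x * ind (\<not> NN x \<le> enat K) \<le> Z x" for x
      using pwb[of x] unfolding abs_le_iff by linarith
    have lb: "- Z x \<le> DD x * ind (\<not> NN x \<le> enat K)" for x
      using pwb[of x] unfolding abs_le_iff by linarith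
    have "(\<integral>\<omega>. DD \<omega> * ind (\<not> NN \<omega> \<le> enat K) \<partial>mu p) \<le> (\<integral>\<omega>. Z \<omega> \<partial>mu p)"
      by (rule integral_mono[OF iDDQ iZ ub])
    moreover have "(\<integral>\<omega>. - Z \<omega> \<partial>mu p) \<le> (\<integral>\<omega>. DD \<omega> * ind (\<not> NN \<omega> \<le> enat K) \<partial>mu p)"
      by (rule integral_mono[OF integrable_minus[OF iZ] iDDQ lb])
    ultimately show ?thesis unfolding e EZ[symmetric] by simp
  qed
  have lim: "(\<lambda>K. Bh * Zs p (Suc K)) \<longlonglongrightarrow> Bh * 0"
    by (intro tendsto_intros LIMSEQ_Suc[OF Zs_lim])
  have "\<bar>\<integral>\<omega>. DD \<omega> \<partial>mu p\<bar> \<le> Bh * 0"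
    by (rule LIMSEQ_le_const[OF lim]) (use bnd in auto)
  then show ?thesis by simp
qed

end
end

context pp
begin

lemma Tm: "Tmap \<in> measurable (mu p) F'"
  unfolding meas_mu by (rule Tmap_meas_F')

lemma prob_mu': "prob_space (mu' p)"
  unfolding mu'_def by (rule prob_space.prob_space_distr[OF prob_mu Tm])

lemma int_mu':
  fixes f :: "(int \<Rightarrow> bool) \<Rightarrow> real"
  assumes "f \<in> borel_measurable F'" "\<And>x. \<bar>f x\<bar> \<le> B"
  shows "integrable (mu' p) f"
proof -
  interpret prob_space "mu' p" by (rule prob_mu')
  have m: "f \<in> borel_measurable (mu' p)" using assms(1) measurable_cong_sets[OF sets_mu' refl, of p borel] by metis
  show ?thesis by (rule integrable_const_bound[where B=B]) (use assms m in auto)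
qed

lemma ind_F': "(\<lambda>\<omega>. ind (\<not> \<omega> i)) \<in> borel_measurable F'"
  unfolding F'_def by (rule measurable_restrict_space1) (rule coord_meas(2))

lemma core:
  fixes h :: "(int \<Rightarrow> bool) \<Rightarrow> real"
  assumes hm: "h \<in> borel_measurable (Fle (i - 1))" and hb: "\<And>x. \<bar>h x\<bar> \<le> Bh"
  shows "(\<integral>\<omega>. h \<omega> * ind (\<not> \<omega> i) \<partial>mu' p) = (\<integral>\<omega>. h \<omega> * gg p i \<omega> \<partial>mu' p)"
proof -
  have hF: "h \<in> borel_measurable F'" by (rule Fle_borel_F'[OF hm])
  have gF: "gg p i \<in> borel_measurable F'"
    using Fle_borel_F'[OF gfun_meas[of p i]] unfolding gg_def[abs_def] .
  have e1: "(\<integral>\<omega>. h \<omega> * ind (\<not> \<omega> i) \<partial>mu' p) = (\<integral>\<omega>. h (Tmap \<omega>) * ind (\<not> Tmap \<omega> i) \<partial>mu p)"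
    unfolding mu'_def by (rule integral_distr[OF Tm]) (use hF ind_F' in measurable)
  have e2: "(\<integral>\<omega>. h \<omega> * gg p i \<omega> \<partial>mu' p) = (\<integral>\<omega>. h (Tmap \<omega>) * gg p i (Tmap \<omega>) \<partial>mu p)"
    unfolding mu'_def by (rule integral_distr[OF Tm]) (use hF gF in measurable)
  have hTm: "(\<lambda>\<omega>. h (Tmap \<omega>)) \<in> borel_measurable Mfull" by (rule hT_meas[OF hm hb])
  have i1: "integrable (mu p) (\<lambda>\<omega>. h (Tmap \<omega>) * ind (\<not> Tmap \<omega> i))"
  proof (rule int_mu[where B=Bh])
    show "(\<lambda>\<omega>. h (Tmap \<omega>) * ind (\<not> Tmap \<omega> i)) \<in> borel_measurable Mfull"
      using hTm sT_meas by (rule borel_measurable_times)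
    fix x
    have "\<bar>h (Tmap x)\<bar> * \<bar>ind (\<not> Tmap x i)\<bar> \<le> Bh * 1" by (rule mult_mono) (use hb Bh_nonneg[OF hm hb] in auto)
    then show "\<bar>h (Tmap x) * ind (\<not> Tmap x i)\<bar> \<le> Bh" by (simp add: abs_mult)
  qed
  have i2: "integrable (mu p) (\<lambda>\<omega>. h (Tmap \<omega>) * gg p i (Tmap \<omega>))"
  proof (rule int_mu[where B=Bh])
    show "(\<lambda>\<omega>. h (Tmap \<omega>) * gg p i (Tmap \<omega>)) \<in> borel_measurable Mfull"
      using hTm gT_meas by (rule borel_measurable_times)
    fix x
    have "\<bar>h (Tmap x)\<bar> * \<bar>gg p i (Tmap x)\<bar> \<le> Bh * 1"
      by (rule mult_mono) (use hb Bh_nonneg[OF hm hb] gg_range[of i "Tmap x"] in auto)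
    then show "\<bar>h (Tmap x) * gg p i (Tmap x)\<bar> \<le> Bh" by (simp add: abs_mult)
  qed
  have "(\<integral>\<omega>. h (Tmap \<omega>) * ind (\<not> Tmap \<omega> i) \<partial>mu p) - (\<integral>\<omega>. h (Tmap \<omega>) * gg p i (Tmap \<omega>) \<partial>mu p)
      = (\<integral>\<omega>. h (Tmap \<omega>) * ind (\<not> Tmap \<omega> i) - h (Tmap \<omega>) * gg p i (Tmap \<omega>) \<partial>mu p)"
    using i1 i2 by simp
  also have "\<dots> = (\<integral>\<omega>. h (Tmap \<omega>) * (ind (\<not> Tmap \<omega> i) - gg p i (Tmap \<omega>)) \<partial>mu p)"
    by (simp add: algebra_simps)
  also have "\<dots> = 0" by (rule DD_zero[OF hm hb])
  finally show ?thesis unfolding e1 e2 by simp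
qed

lemma C1:
  fixes f :: "(int \<Rightarrow> bool) \<Rightarrow> real"
  assumes fm: "f \<in> borel_measurable (Fle i)" and fb: "\<And>x. \<bar>f x\<bar> \<le> B"
  shows "(\<integral>\<omega>. integral\<^sup>L (rho p i i \<omega>) f \<partial>mu' p) = (\<integral>\<omega>. f \<omega> \<partial>mu' p)"
proof -
  define h0 where "h0 \<omega> = f (upd i \<omega> False)" for \<omega>
  define h1 where "h1 \<omega> = f (upd i \<omega> True)" for \<omega>
  define hh where "hh \<omega> = h0 \<omega> - h1 \<omega>" for \<omega>
  have m0: "h0 \<in> borel_measurable (Fle (i - 1))" unfolding h0_def[abs_def]
    using measurable_comp[OF upd_meas fm] by (simp add: comp_def)
  have m1: "h1 \<in> borel_measurable (Fle (i - 1))" unfolding h1_def[abs_def]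
    using measurable_comp[OF upd_meas fm] by (simp add: comp_def)
  have mh: "hh \<in> borel_measurable (Fle (i - 1))" unfolding hh_def[abs_def] using m0 m1 by measurable
  have bh: "\<bar>hh x\<bar> \<le> 2 * B" for x unfolding hh_def h0_def h1_def
    using fb[of "upd i x False"] fb[of "upd i x True"] by linarith
  have b1: "\<bar>h1 x\<bar> \<le> B" for x unfolding h1_def by (rule fb)
  have B0: "0 \<le> B" using fb[of undefined] by simp
  have gF: "gg p i \<in> borel_measurable F'"
    using Fle_borel_F'[OF gfun_meas[of p i]] unfolding gg_def[abs_def] .
  have L: "(\<integral>\<omega>. integral\<^sup>L (rho p i i \<omega>) f \<partial>mu' p) = (\<integral>\<omega>. h1 \<omega> + hh \<omega> * gg p i \<omega> \<partial>mu' p)"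
  proof (rule Bochner_Integration.integral_cong[OF refl])
    fix \<omega> assume "\<omega> \<in> space (mu' p)"
    then have v: "valid \<omega>" by simp
    show "integral\<^sup>L (rho p i i \<omega>) f = h1 \<omega> + hh \<omega> * gg p i \<omega>"
      unfolding integral_rho_single[OF fm v] hh_def h0_def h1_def by (simp add: algebra_simps)
  qed
  have R: "(\<integral>\<omega>. f \<omega> \<partial>mu' p) = (\<integral>\<omega>. h1 \<omega> + hh \<omega> * ind (\<not> \<omega> i) \<partial>mu' p)"
  proof (rule Bochner_Integration.integral_cong[OF refl])
    fix \<omega> assume "\<omega> \<in> space (mu' p)"
    then have v: "valid \<omega>" by simp
    have fe: "f \<omega> = f (upd i \<omega> (\<omega> i))"
      by (rule Fle_fun_cyl[OF fm _ v valid_upd[OF v]]) (simp add: upd_self[OF v])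
    show "f \<omega> = h1 \<omega> + hh \<omega> * ind (\<not> \<omega> i)"
      unfolding fe hh_def h0_def h1_def by (cases "\<omega> i") simp_all
  qed
  have ih1: "integrable (mu' p) h1" by (rule int_mu'[OF Fle_borel_F'[OF m1] b1])
  have ihg: "integrable (mu' p) (\<lambda>\<omega>. hh \<omega> * gg p i \<omega>)"
  proof (rule int_mu'[where B="2 * B"])
    show "(\<lambda>\<omega>. hh \<omega> * gg p i \<omega>) \<in> borel_measurable F'"
      using Fle_borel_F'[OF mh] gF by (rule borel_measurable_times)
    fix x
    have "\<bar>hh x\<bar> * \<bar>gg p i x\<bar> \<le> (2 * B) * 1"
      by (rule mult_mono) (use bh gg_range[of i x] B0 in auto)
    then show "\<bar>hh x * gg p i x\<bar> \<le> 2 * B" by (simp add: abs_mult)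
  qed
  have ihs: "integrable (mu' p) (\<lambda>\<omega>. hh \<omega> * ind (\<not> \<omega> i))"
  proof (rule int_mu'[where B="2 * B"])
    show "(\<lambda>\<omega>. hh \<omega> * ind (\<not> \<omega> i)) \<in> borel_measurable F'"
      using Fle_borel_F'[OF mh] ind_F' by (rule borel_measurable_times)
    fix x
    have "\<bar>hh x\<bar> * \<bar>ind (\<not> x i)\<bar> \<le> (2 * B) * 1"
      by (rule mult_mono) (use bh B0 in auto)
    then show "\<bar>hh x * ind (\<not> x i)\<bar> \<le> 2 * B" by (simp add: abs_mult)
  qed
  have "(\<integral>\<omega>. h1 \<omega> + hh \<omega> * gg p i \<omega> \<partial>mu' p) = (\<integral>\<omega>. h1 \<omega> \<partial>mu' p) + (\<integral>\<omega>. hh \<omega> * gg p i \<omega> \<partial>mu' p)"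
    by (rule Bochner_Integration.integral_add[OF ih1 ihg])
  also have "(\<integral>\<omega>. hh \<omega> * gg p i \<omega> \<partial>mu' p) = (\<integral>\<omega>. hh \<omega> * ind (\<not> \<omega> i) \<partial>mu' p)"
    by (rule core[OF mh bh, symmetric])
  also have "(\<integral>\<omega>. h1 \<omega> \<partial>mu' p) + (\<integral>\<omega>. hh \<omega> * ind (\<not> \<omega> i) \<partial>mu' p) = (\<integral>\<omega>. h1 \<omega> + hh \<omega> * ind (\<not> \<omega> i) \<partial>mu' p)"
    by (rule Bochner_Integration.integral_add[OF ih1 ihs, symmetric])
  finally show ?thesis unfolding L R .
qed

end

theorem theorem3p4:
  fixes p :: real
  assumes "0 < p" and "p < 1"
  shows "\<exists>\<rho>. is_LIS \<rho> \<and> transl_inv_LIS \<rho> \<and>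
           (\<forall>\<omega> \<in> Omega'.
              measure (\<rho> 0 0 \<omega>) {\<eta> \<in> Omega'. \<not> \<eta> 0} = gp p (nfun \<omega>) \<and>
              measure (\<rho> 0 0 \<omega>) {\<eta> \<in> Omega'. \<eta> 0} = 1 - gp p (nfun \<omega>)) \<and>
           consistent_LIS (mu' p) \<rho>"
proof -
  interpret pp p using assms by unfold_locales
  have L1: "\<forall>l m \<omega>. l \<le> m \<longrightarrow> \<omega> \<in> Omega' \<longrightarrow> prob_space (rho p l m \<omega>) \<and> sets (rho p l m \<omega>) = sets (Fle m)"
    using rho_prob by simp
  have L2: "\<forall>l m A. l \<le> m \<longrightarrow> A \<in> sets (Fle m) \<longrightarrow> (\<lambda>\<omega>. measure (rho p l m \<omega>) A) \<in> borel_measurable (Flt l)"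
  proof (intro allI impI)
    fix l m A assume lm: "l \<le> m" and A: "A \<in> sets (Fle m)"
    have As: "A \<subseteq> Omega'" using sets.sets_into_space[OF A] by simp
    have "(\<lambda>\<omega>. integral\<^sup>L (rho p l m \<omega>) (indicator A :: _ \<Rightarrow> real)) \<in> borel_measurable (Flt l)"
      by (rule meas_gen[OF refl lm borel_measurable_indicator[OF A], of 1]) (simp add: indicator_def)
    moreover have "(\<lambda>\<omega>. integral\<^sup>L (rho p l m \<omega>) (indicator A :: _ \<Rightarrow> real)) = (\<lambda>\<omega>. measure (rho p l m \<omega>) A)"
      using As by (simp add: Int_absorb2)
    ultimately show "(\<lambda>\<omega>. measure (rho p l m \<omega>) A) \<in> borel_measurable (Flt l)" by simp
  qed
  have L3: "\<forall>l m B \<omega>. l \<le> m \<longrightarrow> B \<in> sets (Flt l) \<longrightarrow> \<omega> \<in> Omega' \<longrightarrow>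
        measure (rho p l m \<omega>) B = indicator B \<omega>"
    using rho_past by simp
  have L4: "\<forall>l m l' m' f \<omega>. l' \<le> l \<longrightarrow> l \<le> m \<longrightarrow> m \<le> m' \<longrightarrow>
        f \<in> borel_measurable (Fle m) \<longrightarrow> bounded (range (f :: (int \<Rightarrow> bool) \<Rightarrow> real)) \<longrightarrow>
        \<omega> \<in> Omega' \<longrightarrow>
        (\<integral>\<eta>. (\<integral>\<zeta>. f \<zeta> \<partial>(rho p l m \<eta>)) \<partial>(rho p l' m' \<omega>)) = (\<integral>\<zeta>. f \<zeta> \<partial>(rho p l' m' \<omega>))"
  proof (intro allI impI)
    fix l m l' m' \<omega> and f :: "(int \<Rightarrow> bool) \<Rightarrow> real"
    assume a: "l' \<le> l" "l \<le> m" "m \<le> m'" "f \<in> borel_measurable (Fle m)" "bounded (range f)" "\<omega> \<in> Omega'"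
    obtain B where B: "\<And>x. \<bar>f x\<bar> \<le> B" using a(5) unfolding bounded_real by auto
    show "(\<integral>\<eta>. (\<integral>\<zeta>. f \<zeta> \<partial>(rho p l m \<eta>)) \<partial>(rho p l' m' \<omega>)) = (\<integral>\<zeta>. f \<zeta> \<partial>(rho p l' m' \<omega>))"
      using rho_nest[OF a(1,2,3,4) B] a(6) by simp
  qed
  have LIS: "is_LIS (rho p)" unfolding is_LIS_def using L1 L2 L3 L4 by blast
  have TI: "transl_inv_LIS (rho p)" unfolding transl_inv_LIS_def using rho_transl by simp
  have GP: "\<forall>\<omega> \<in> Omega'.
              measure (rho p 0 0 \<omega>) {\<eta> \<in> Omega'. \<not> \<eta> 0} = gp p (nfun \<omega>) \<and>
              measure (rho p 0 0 \<omega>) {\<eta> \<in> Omega'. \<eta> 0} = 1 - gp p (nfun \<omega>)"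
    using rho_gp by simp
  have CO: "consistent_LIS (mu' p) (rho p)"
    unfolding consistent_LIS_def
  proof (intro allI impI)
    fix l m and f :: "(int \<Rightarrow> bool) \<Rightarrow> real"
    assume a: "l \<le> m" "f \<in> borel_measurable (Fle m)" "bounded (range f)"
    obtain B where B: "\<And>x. \<bar>f x\<bar> \<le> B" using a(3) unfolding bounded_real by auto
    show "(\<integral>\<omega>. (\<integral>\<zeta>. f \<zeta> \<partial>(rho p l m \<omega>)) \<partial>mu' p) = (\<integral>\<omega>. f \<omega> \<partial>mu' p)"
      by (rule consistency_from_C1[OF C1 refl a(1,2) B])
  qed
  show ?thesis using LIS TI GP CO by blast
qed

end
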